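(* Let $\eta,\epsilon>0$ and let $\mu$ be a distribution over $\{-1,+1\}^n$. If $\mu$ has $(\eta,\epsilon)$-complete limited correlation, then for every integer $k\ge1$, the $k$-transformation $\mu_k=\mathrm{Rd}(\mu,k)$ has $(\eta+2,\epsilon)$-complete limited correlation.
   Context: For a distribution $\nu$ on $\{-1,+1\}^N$ ($N$ finite index set): $\Omega(\nu)$ support, $\nu_\Lambda$ marginal, $\nu^\sigma$ conditional given $\sigma\in\Omega(\nu_\Lambda)$, $\nu^{i\gets x}$ conditioned on coordinate $i$ equal $x$. $(\boldsymbol\lambda*\nu)(\sigma)\propto\nu(\sigma)\prod_{i:\sigma_i=+1}\lambda_i$. Correlation: $\Psi^{\mathrm{Cor}}_\nu(i,i)=\nu_i(-1)$; for $i\ne j$, $\Psi^{\mathrm{Cor}}_\nu(i,j)=\nu_j^{i\gets+1}(+1)-\nu_j(+1)$ if $+1\in\Omega(\nu_i)$, else $0$; $\Psi^{\mathrm{AbsCor}}_\nu=|\Psi^{\mathrm{Cor}}_\nu|$ entrywise. $\nu$ has $\eta$-limited correlation if the spectral radius of $\Psi^{\mathrm{AbsCor}}_{\nu^\sigma}$ is $\le\eta$ for all $\Lambda\subseteq N$ and $\sigma\in\Omega(\nu_\Lambda)$; $(\eta,\epsilon)$-complete limited correlation if $(\boldsymbol\lambda*\nu)$ has $\eta$-limited correlation for all $\boldsymbol\lambda\in(0,1+\epsilon]^N$. $k$-transformation: $\mathrm{Rd}(\mu,k)$ is the law of $Y\in\{-1,+1\}^{[n]\times[k]}$ from $X\sim\mu$: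 if $X_i=-1$, $Y_{(i,j)}=-1$ for all $j$; if $X_i=+1$, $Y_{(i,j^* )}=+1$ and others $-1$, with $j^*$ uniform in $[k]$ independently. *)

theory Defs
  imports "HOL-Analysis.Analysis" "HOL-Library.FuncSet"
begin

definition cube :: "'i set \<Rightarrow> ('i \<Rightarrow> int) set" where
  "cube N = PiE N (\<lambda>_. {-1, 1})"

definition is_dist :: "'i set \<Rightarrow> (('i \<Rightarrow> int) \<Rightarrow> real) \<Rightarrow> bool" where
  "is_dist N nu \<longleftrightarrow> (\<forall>\<sigma>\<in>cube N. 0 \<le> nu \<sigma>) \<and> (\<Sum>\<sigma>\<in>cube N. nu \<sigma>) = 1"

definition prob_ev :: "'i set \<Rightarrow> (('i \<Rightarrow> int) \<Rightarrow> real) \<Rightarrow> (('i \<Rightarrow> int) \<Rightarrow> bool) \<Rightarrow> real" where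
  "prob_ev N nu P = (\<Sum>\<sigma>\<in>{\<sigma>\<in>cube N. P \<sigma>}. nu \<sigma>)"

definition marginal :: "'i set \<Rightarrow> (('i \<Rightarrow> int) \<Rightarrow> real) \<Rightarrow> 'i set \<Rightarrow> ('i \<Rightarrow> int) \<Rightarrow> real" where
  "marginal N nu \<Lambda> \<tau> = prob_ev N nu (\<lambda>\<sigma>. \<forall>i\<in>\<Lambda>. \<sigma> i = \<tau> i)"

definition support_marg :: "'i set \<Rightarrow> (('i \<Rightarrow> int) \<Rightarrow> real) \<Rightarrow> 'i set \<Rightarrow> ('i \<Rightarrow> int) set" where
  "support_marg N nu \<Lambda> = {\<tau> \<in> cube \<Lambda>. 0 < marginal N nu \<Lambda> \<tau>}"

definition cond :: "'i set \<Rightarrow> (('i \<Rightarrow> int) \<Rightarrow> real) \<Rightarrow> 'i set \<Rightarrow> ('i \<Rightarrow> int) \<Rightarrow> (('i \<Rightarrow> int) \<Rightarrow> real)" where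
  "cond N nu \<Lambda> \<tau> = (\<lambda>\<rho>. nu (\<lambda>i. if i \<in> \<Lambda> then \<tau> i else \<rho> i) / marginal N nu \<Lambda> \<tau>)"

definition pin :: "'i \<Rightarrow> int \<Rightarrow> ('i \<Rightarrow> int)" where
  "pin i x = restrict (\<lambda>_. x) {i}"

definition psi_cor :: "'i set \<Rightarrow> (('i \<Rightarrow> int) \<Rightarrow> real) \<Rightarrow> 'i \<Rightarrow> 'i \<Rightarrow> real" where
  "psi_cor N nu i j =
     (if i = j then marginal N nu {i} (pin i (-1))
      else if pin i 1 \<in> support_marg N nu {i}
      then marginal (N - {i}) (cond N nu {i} (pin i 1)) {j} (pin j 1)
           - marginal N nu {j} (pin j 1)
      else 0)"

definition psi_abscor :: "'i set \<Rightarrow> (('i \<Rightarrow> int) \<Rightarrow> real) \<Rightarrow> 'i \<Rightarrow> 'i \<Rightarrow> real" where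
  "psi_abscor N nu i j = \<bar>psi_cor N nu i j\<bar>"

definition is_eigenvalue :: "'i set \<Rightarrow> ('i \<Rightarrow> 'i \<Rightarrow> real) \<Rightarrow> complex \<Rightarrow> bool" where
  "is_eigenvalue I A c \<longleftrightarrow>
     (\<exists>v :: 'i \<Rightarrow> complex. (\<exists>i\<in>I. v i \<noteq> 0) \<and>
        (\<forall>i\<in>I. (\<Sum>j\<in>I. complex_of_real (A i j) * v j) = c * v i))"

definition spec_radius :: "'i set \<Rightarrow> ('i \<Rightarrow> 'i \<Rightarrow> real) \<Rightarrow> real" where
  "spec_radius I A = (if I = {} then 0 else Sup (cmod ` {c. is_eigenvalue I A c}))"

definition limited_corr :: "'i set \<Rightarrow> (('i \<Rightarrow> int) \<Rightarrow> real) \<Rightarrow> real \<Rightarrow> bool" where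
  "limited_corr N nu \<eta> \<longleftrightarrow>
     (\<forall>\<Lambda>. \<Lambda> \<subseteq> N \<longrightarrow> (\<forall>\<tau>\<in>support_marg N nu \<Lambda>.
        spec_radius (N - \<Lambda>) (psi_abscor (N - \<Lambda>) (cond N nu \<Lambda> \<tau>)) \<le> \<eta>))"

definition tilt :: "'i set \<Rightarrow> ('i \<Rightarrow> real) \<Rightarrow> (('i \<Rightarrow> int) \<Rightarrow> real) \<Rightarrow> (('i \<Rightarrow> int) \<Rightarrow> real)" where
  "tilt N lam nu = (\<lambda>\<sigma>. nu \<sigma> * (\<Prod>i\<in>{i\<in>N. \<sigma> i = 1}. lam i) /
      (\<Sum>\<sigma>'\<in>cube N. nu \<sigma>' * (\<Prod>i\<in>{i\<in>N. \<sigma>' i = 1}. lam i)))"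

definition complete_limited_corr :: "'i set \<Rightarrow> (('i \<Rightarrow> int) \<Rightarrow> real) \<Rightarrow> real \<Rightarrow> real \<Rightarrow> bool" where
  "complete_limited_corr N nu \<eta> \<epsilon> \<longleftrightarrow>
     (\<forall>lam. (\<forall>i\<in>N. 0 < lam i \<and> lam i \<le> 1 + \<epsilon>) \<longrightarrow> limited_corr N (tilt N lam nu) \<eta>)"

definition Rd :: "'i set \<Rightarrow> nat \<Rightarrow> (('i \<Rightarrow> int) \<Rightarrow> real) \<Rightarrow> (('i \<times> nat \<Rightarrow> int) \<Rightarrow> real)" where
  "Rd N k mu = (\<lambda>Y. \<Sum>X\<in>cube N. mu X *
      (\<Prod>i\<in>N. if X i = -1
               then (if \<forall>j\<in>{1..k}. Y (i, j) = -1 then 1 else 0)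
               else (if card {j\<in>{1..k}. Y (i, j) = 1} = 1 then 1 / real k else 0)))"

end

theory Submission
  imports Defs "Jordan_Normal_Form.Spectral_Radius"
begin

lemma eig_row_bound:
  fixes B :: "'i \<Rightarrow> 'i \<Rightarrow> real"
  assumes fin: "finite I" and ev: "is_eigenvalue I B c"
  shows "cmod c \<le> (\<Sum>i\<in>I. \<Sum>j\<in>I. \<bar>B i j\<bar>)"
proof -
  from ev obtain v where nz: "\<exists>i\<in>I. v i \<noteq> 0"
    and eq: "\<And>i. i\<in>I \<Longrightarrow> (\<Sum>j\<in>I. complex_of_real (B i j) * v j) = c * v i"
    unfolding is_eigenvalue_def by blast
  have ne: "I \<noteq> {}" using nz by auto
  let ?m = "Max ((\<lambda>j. cmod (v j)) ` I)"
  have "?m \<in> (\<lambda>j. cmod (v j)) ` I" using fin ne by (intro Max_in) auto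
  then obtain i0 where i0I: "i0 \<in> I" and m: "?m = cmod (v i0)" by blast
  have i0: "i0 \<in> I" "\<And>j. j \<in> I \<Longrightarrow> cmod (v j) \<le> cmod (v i0)"
    using i0I apply simp
    unfolding m[symmetric] using fin by (intro Max_ge) auto
  have pos: "cmod (v i0) > 0"
  proof -
    from nz obtain i1 where "i1 \<in> I" "v i1 \<noteq> 0" by blast
    then have "0 < cmod (v i1)" by simp
    also have "\<dots> \<le> cmod (v i0)" using i0(2) \<open>i1 \<in> I\<close> by blast
    finally show ?thesis .
  qed
  have "cmod c * cmod (v i0) = cmod (\<Sum>j\<in>I. complex_of_real (B i0 j) * v j)"
    using eq[OF i0(1)] by (simp add: norm_mult)
  also have "\<dots> \<le> (\<Sum>j\<in>I. cmod (complex_of_real (B i0 j) * v j))" by (rule norm_sum)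
  also have "\<dots> \<le> (\<Sum>j\<in>I. \<bar>B i0 j\<bar> * cmod (v i0))"
    by (intro sum_mono) (auto simp: norm_mult intro!: mult_left_mono i0(2))
  also have "\<dots> = (\<Sum>j\<in>I. \<bar>B i0 j\<bar>) * cmod (v i0)" by (simp add: sum_distrib_right)
  finally have "cmod c \<le> (\<Sum>j\<in>I. \<bar>B i0 j\<bar>)" using pos by simp
  also have "\<dots> \<le> (\<Sum>i\<in>I. \<Sum>j\<in>I. \<bar>B i j\<bar>)"
    using i0(1) fin by (intro member_le_sum) (auto intro: sum_nonneg)
  finally show ?thesis .
qed

lemma eig_le_spec:
  assumes fin: "finite I" and ev: "is_eigenvalue I B c"
  shows "cmod c \<le> spec_radius I B"
proof -
  have ne: "I \<noteq> {}" using ev unfolding is_eigenvalue_def by auto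
  have "bdd_above (cmod ` {c. is_eigenvalue I B c})"
    using eig_row_bound[OF fin] by (auto intro!: bdd_aboveI[where M="\<Sum>i\<in>I. \<Sum>j\<in>I. \<bar>B i j\<bar>"])
  then show ?thesis unfolding spec_radius_def using ne ev by (auto intro: cSup_upper)
qed

definition jmat :: "nat \<Rightarrow> (nat \<Rightarrow> 'i) \<Rightarrow> ('i \<Rightarrow> 'i \<Rightarrow> real) \<Rightarrow> complex mat" where
  "jmat n f B = mat n n (\<lambda>(a,b). complex_of_real (B (f a) (f b)))"

lemma jmat_eig:
  assumes bij: "bij_betw f {0..<n} I" and ev: "eigenvalue (jmat n f B) e"
  shows "is_eigenvalue I B e"
proof -
  let ?g = "inv_into {0..<n} f"
  from ev obtain v where v: "v \<in> carrier_vec n" "v \<noteq> 0\<^sub>v n" "jmat n f B *\<^sub>v v = e \<cdot>\<^sub>v v"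
    unfolding eigenvalue_def eigenvector_def jmat_def by auto
  from v(1,2) obtain a where a: "a < n" "v $ a \<noteq> 0"
    by (metis carrier_vecD eq_vecI index_zero_vec(1) index_zero_vec(2))
  have gf: "\<And>a. a < n \<Longrightarrow> ?g (f a) = a" using bij by (simp add: bij_betw_def)
  have fg: "\<And>i. i \<in> I \<Longrightarrow> f (?g i) = i" "\<And>i. i \<in> I \<Longrightarrow> ?g i < n"
    using bij by (auto simp: bij_betw_def f_inv_into_f inv_into_into)
  show ?thesis unfolding is_eigenvalue_def
  proof (intro exI[of _ "\<lambda>i. v $ ?g i"] conjI ballI)
    show "\<exists>i\<in>I. v $ ?g i \<noteq> 0" proof (rule bexI[of _ "f a"])
      show "f a \<in> I" using a bij by (auto simp: bij_betw_def)
      show "v $ ?g (f a) \<noteq> 0" using a gf by simp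
    qed
  next
    fix i assume i: "i \<in> I"
    have "(\<Sum>j\<in>I. complex_of_real (B i j) * v $ ?g j) = (\<Sum>b\<in>{0..<n}. complex_of_real (B i (f b)) * v $ ?g (f b))"
      by (rule sum.reindex_bij_betw[OF bij, symmetric])
    also have "\<dots> = (\<Sum>b\<in>{0..<n}. complex_of_real (B (f (?g i)) (f b)) * v $ b)"
      using gf fg i by (intro sum.cong) auto
    also have "\<dots> = (\<Sum>b\<in>{0..<n}. jmat n f B $$ (?g i, b) * v $ b)"
      using fg(2)[OF i] by (intro sum.cong) (simp_all add: jmat_def)
    also have "\<dots> = (jmat n f B *\<^sub>v v) $ ?g i"
      using fg(2)[OF i] v(1) by (simp add: jmat_def scalar_prod_def row_def)
    also have "\<dots> = e * v $ ?g i" using v(3) fg(2)[OF i] v(1) by simp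
    finally show "(\<Sum>j\<in>I. complex_of_real (B i j) * v $ ?g j) = e * v $ ?g i" .
  qed
qed

lemma exists_eig:
  assumes fin: "finite I" and ne: "I \<noteq> {}"
  shows "\<exists>c. is_eigenvalue I B c"
proof -
  obtain f where bij: "bij_betw f {0..<card I} I" using ex_bij_betw_nat_finite[OF fin] by blast
  have "card I > 0" using fin ne by auto
  from spectrum_non_empty[of "jmat (card I) f B", OF _ this] obtain e where "eigenvalue (jmat (card I) f B) e"
    unfolding spectrum_def jmat_def by auto
  then show ?thesis using jmat_eig[OF bij] by blast
qed

lemma spec_le:
  assumes fin: "finite I" and bnd: "\<And>c. is_eigenvalue I B c \<Longrightarrow> cmod c \<le> r" and r: "0 \<le> r"
  shows "spec_radius I B \<le> r"
proof (cases "I = {}")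
  case True then show ?thesis using r by (simp add: spec_radius_def)
next
  case False
  then obtain c where "is_eigenvalue I B c" using exists_eig[OF fin] by blast
  then show ?thesis unfolding spec_radius_def using False bnd by (auto intro!: cSup_least)
qed


lemma eig_scale:
  assumes ev: "is_eigenvalue I (\<lambda>i j. B i j / t) e" and t: "t \<noteq> 0"
  shows "is_eigenvalue I B (complex_of_real t * e)"
proof -
  from ev obtain v where nz: "\<exists>i\<in>I. v i \<noteq> 0"
    and eq: "\<And>i. i\<in>I \<Longrightarrow> (\<Sum>j\<in>I. complex_of_real (B i j / t) * v j) = e * v i"
    unfolding is_eigenvalue_def by blast
  show ?thesis unfolding is_eigenvalue_def
  proof (intro exI[of _ v] conjI ballI nz)
    fix i assume i: "i \<in> I"
    have "(\<Sum>j\<in>I. complex_of_real (B i j) * v j) = complex_of_real t * (\<Sum>j\<in>I. complex_of_real (B i j / t) * v j)"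
      using t by (simp add: sum_distrib_left field_simps)
    also have "\<dots> = complex_of_real t * e * v i" using eq[OF i] by simp
    finally show "(\<Sum>j\<in>I. complex_of_real (B i j) * v j) = complex_of_real t * e * v i" .
  qed
qed

lemma jmat_step:
  assumes bij: "bij_betw f {0..<n} I"
  shows "jmat n f B *\<^sub>v vec n (\<lambda>a. complex_of_real (u (f a)))
        = vec n (\<lambda>a. complex_of_real (\<Sum>j\<in>I. B (f a) j * u j))"
proof (rule eq_vecI)
  show "dim_vec (jmat n f B *\<^sub>v vec n (\<lambda>a. complex_of_real (u (f a)))) = dim_vec (vec n (\<lambda>a. complex_of_real (\<Sum>j\<in>I. B (f a) j * u j)))"
    by (simp add: jmat_def)
  fix a assume "a < dim_vec (vec n (\<lambda>a. complex_of_real (\<Sum>j\<in>I. B (f a) j * u j)))"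
  then have a: "a < n" by simp
  have "(jmat n f B *\<^sub>v vec n (\<lambda>a. complex_of_real (u (f a)))) $ a
      = (\<Sum>b\<in>{0..<n}. complex_of_real (B (f a) (f b)) * complex_of_real (u (f b)))"
    using a by (simp add: jmat_def scalar_prod_def row_def)
  also have "\<dots> = complex_of_real (\<Sum>b\<in>{0..<n}. B (f a) (f b) * u (f b))" by simp
  also have "(\<Sum>b\<in>{0..<n}. B (f a) (f b) * u (f b)) = (\<Sum>j\<in>I. B (f a) j * u j)"
    by (rule sum.reindex_bij_betw[OF bij])
  finally show "(jmat n f B *\<^sub>v vec n (\<lambda>a. complex_of_real (u (f a)))) $ a = vec n (\<lambda>a. complex_of_real (\<Sum>j\<in>I. B (f a) j * u j)) $ a"
    using a by simp
qed

lemma perron_lite: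
  fixes B :: "'i \<Rightarrow> 'i \<Rightarrow> real"
  assumes fin: "finite I" and Bnn: "\<And>i j. i\<in>I \<Longrightarrow> j\<in>I \<Longrightarrow> 0 \<le> B i j"
    and znn: "\<And>i. i\<in>I \<Longrightarrow> 0 \<le> z i" and i0: "i0 \<in> I" and zi0: "0 < z i0" and s: "0 < s"
    and ineq: "\<And>i. i\<in>I \<Longrightarrow> s * z i \<le> (\<Sum>j\<in>I. B i j * z j)"
  shows "s \<le> spec_radius I B"
proof (rule ccontr)
  assume "\<not> ?thesis"
  then have lt: "spec_radius I B < s" by simp
  have ne: "I \<noteq> {}" using i0 by auto
  define n where "n = card I"
  obtain f where bij: "bij_betw f {0..<n} I" using ex_bij_betw_nat_finite[OF fin] unfolding n_def by blast
  have n0: "n > 0" using fin ne unfolding n_def by auto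
  obtain c0 where "is_eigenvalue I B c0" using exists_eig[OF fin ne] by blast
  then have sp0: "0 \<le> spec_radius I B" using eig_le_spec[OF fin] norm_ge_zero order_trans by blast
  define t where "t = (spec_radius I B + s) / 2"
  have t: "0 < t" "spec_radius I B < t" "t < s" using sp0 lt unfolding t_def by auto
  define B' where "B' = (\<lambda>i j. B i j / t)"
  define A where "A = jmat n f B'"
  have Ac: "A \<in> carrier_mat n n" unfolding A_def jmat_def by simp
  have "spectral_radius A < 1"
  proof -
    from spectral_radius_mem_max(1)[OF Ac n0] obtain e where e: "e \<in> spectrum A" and eq: "spectral_radius A = cmod e"
      by auto
    from e have "is_eigenvalue I B' e" using jmat_eig[OF bij] unfolding spectrum_def A_def by auto
    then have "is_eigenvalue I B (complex_of_real t * e)" using eig_scale[of I B t e] t unfolding B'_def by auto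
    then have "cmod (complex_of_real t * e) \<le> spec_radius I B" by (rule eig_le_spec[OF fin])
    then have "t * cmod e \<le> spec_radius I B" using t by (simp add: norm_mult)
    then have "t * cmod e < t * 1" using t by linarith
    then have "cmod e < 1" using t(1) mult_less_cancel_left_pos by blast
    then show ?thesis using eq by simp
  qed
  from spectral_radius_jnf_norm_bound_less_1_upper_triangular[OF Ac this]
  obtain C where C: "\<And>k. norm_bound (A ^\<^sub>m k) C" by blast
  define T where "T = (\<lambda>(u::'i \<Rightarrow> real) i. \<Sum>j\<in>I. B' i j * u j)"
  have vec: "(A ^\<^sub>m k) *\<^sub>v vec n (\<lambda>a. complex_of_real (u (f a))) = vec n (\<lambda>a. complex_of_real ((T ^^ k) u (f a)))" for k u
  proof (induction k arbitrary: u)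
    case 0
    then show ?case using Ac by simp
  next
    case (Suc k)
    have "(A ^\<^sub>m Suc k) *\<^sub>v vec n (\<lambda>a. complex_of_real (u (f a))) = (A ^\<^sub>m k) *\<^sub>v (A *\<^sub>v vec n (\<lambda>a. complex_of_real (u (f a))))"
      using Ac by (simp del: assoc_mult_mat_vec add: assoc_mult_mat_vec[of _ n n _ n])
    also have "A *\<^sub>v vec n (\<lambda>a. complex_of_real (u (f a))) = vec n (\<lambda>a. complex_of_real (T u (f a)))"
      unfolding A_def T_def using jmat_step[OF bij] by simp
    also have "(A ^\<^sub>m k) *\<^sub>v \<dots> = vec n (\<lambda>a. complex_of_real ((T ^^ k) (T u) (f a)))" by (rule Suc.IH)
    finally show ?case by (simp add: funpow_Suc_right del: funpow.simps)
  qed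
  have grow: "\<forall>i\<in>I. (s/t)^k * z i \<le> (T ^^ k) z i" for k
  proof (induction k)
    case 0 then show ?case by simp
  next
    case (Suc k)
    show ?case
    proof
      fix i assume i: "i \<in> I"
      have "(s/t)^(Suc k) * z i = (s/t)^k / t * (s * z i)" by (simp add: field_simps)
      also have "\<dots> \<le> (s/t)^k / t * (\<Sum>j\<in>I. B i j * z j)"
        using ineq[OF i] t s by (intro mult_left_mono) auto
      also have "\<dots> = (\<Sum>j\<in>I. B' i j * ((s/t)^k * z j))"
        unfolding B'_def by (simp add: sum_distrib_left sum_divide_distrib field_simps)
      also have "\<dots> \<le> (\<Sum>j\<in>I. B' i j * (T ^^ k) z j)"
        using Suc.IH Bnn i t unfolding B'_def by (intro sum_mono mult_left_mono) auto
      also have "\<dots> = (T ^^ Suc k) z i" unfolding T_def by simp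
      finally show "(s/t)^(Suc k) * z i \<le> (T ^^ Suc k) z i" .
    qed
  qed
  let ?g = "inv_into {0..<n} f"
  have gi0: "?g i0 < n" "f (?g i0) = i0" using bij i0 by (auto simp: bij_betw_def f_inv_into_f inv_into_into)
  define S where "S = (\<Sum>b\<in>{0..<n}. \<bar>z (f b)\<bar>)"
  have bound: "(T ^^ k) z i0 \<le> C * S" for k
  proof -
    let ?a = "?g i0"
    have "complex_of_real ((T ^^ k) z i0) = ((A ^\<^sub>m k) *\<^sub>v vec n (\<lambda>a. complex_of_real (z (f a)))) $ ?a"
      unfolding vec using gi0 by simp
    also have "\<dots> = (\<Sum>b\<in>{0..<n}. (A ^\<^sub>m k) $$ (?a, b) * complex_of_real (z (f b)))"
      using gi0 Ac by (simp add: scalar_prod_def row_def)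
    finally have "\<bar>(T ^^ k) z i0\<bar> = cmod (\<Sum>b\<in>{0..<n}. (A ^\<^sub>m k) $$ (?a, b) * complex_of_real (z (f b)))"
      by (metis norm_of_real)
    also have "\<dots> \<le> (\<Sum>b\<in>{0..<n}. cmod ((A ^\<^sub>m k) $$ (?a, b) * complex_of_real (z (f b))))" by (rule norm_sum)
    also have "\<dots> \<le> (\<Sum>b\<in>{0..<n}. C * \<bar>z (f b)\<bar>)"
    proof (intro sum_mono)
      fix b assume b: "b \<in> {0..<n}"
      have "cmod ((A ^\<^sub>m k) $$ (?a, b)) \<le> C" using C[of k] gi0 b Ac unfolding norm_bound_def by auto
      then show "cmod ((A ^\<^sub>m k) $$ (?a, b) * complex_of_real (z (f b))) \<le> C * \<bar>z (f b)\<bar>"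
        by (simp add: norm_mult mult_right_mono)
    qed
    also have "\<dots> = C * S" unfolding S_def by (simp add: sum_distrib_left)
    finally show ?thesis by simp
  qed
  have "1 < s / t" using t by simp
  from real_arch_pow[OF this, of "C * S / z i0"] obtain k where "C * S / z i0 < (s/t)^k" by blast
  then have "C * S < (s/t)^k * z i0" using zi0 by (simp add: field_simps)
  also have "\<dots> \<le> (T ^^ k) z i0" using grow i0 by blast
  also have "\<dots> \<le> C * S" by (rule bound)
  finally show False by simp
qed

lemma cube_val: "\<sigma> \<in> cube N \<Longrightarrow> i \<in> N \<Longrightarrow> \<sigma> i = -1 \<or> \<sigma> i = 1"
  unfolding cube_def by auto

lemma cube_out: "\<sigma> \<in> cube N \<Longrightarrow> i \<notin> N \<Longrightarrow> \<sigma> i = undefined"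
  unfolding cube_def by (auto simp: PiE_def extensional_def)

lemma finite_cube: "finite N \<Longrightarrow> finite (cube N)"
  unfolding cube_def by (intro finite_PiE) auto

lemma sum_merge:
  assumes L: "\<Lambda> \<subseteq> M" and tau: "\<tau> \<in> cube \<Lambda>"
  shows "(\<Sum>\<rho>\<in>cube (M-\<Lambda>). g (\<lambda>i. if i\<in>\<Lambda> then \<tau> i else \<rho> i))
       = (\<Sum>\<sigma>\<in>{\<sigma>\<in>cube M. \<forall>i\<in>\<Lambda>. \<sigma> i = \<tau> i}. g \<sigma>)"
proof (rule sum.reindex_bij_witness[of _ "\<lambda>\<sigma>. restrict \<sigma> (M-\<Lambda>)" "\<lambda>\<rho> i. if i\<in>\<Lambda> then \<tau> i else \<rho> i"])
  fix \<rho> assume r: "\<rho> \<in> cube (M-\<Lambda>)"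
  show "restrict (\<lambda>i. if i\<in>\<Lambda> then \<tau> i else \<rho> i) (M-\<Lambda>) = \<rho>"
    using r by (auto simp: restrict_def cube_def PiE_def extensional_def)
  show "(\<lambda>i. if i\<in>\<Lambda> then \<tau> i else \<rho> i) \<in> {\<sigma>\<in>cube M. \<forall>i\<in>\<Lambda>. \<sigma> i = \<tau> i}"
    using r tau L by (auto simp: cube_def PiE_def extensional_def Pi_def)
next
  fix \<sigma> assume s: "\<sigma> \<in> {\<sigma>\<in>cube M. \<forall>i\<in>\<Lambda>. \<sigma> i = \<tau> i}"
  show "(\<lambda>i. if i\<in>\<Lambda> then \<tau> i else restrict \<sigma> (M-\<Lambda>) i) = \<sigma>"
    using s L by (auto simp: restrict_def cube_def PiE_def extensional_def)
  show "restrict \<sigma> (M-\<Lambda>) \<in> cube (M-\<Lambda>)"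
    using s by (auto simp: cube_def PiE_def Pi_def)
qed simp

lemma prob_ev_cond:
  assumes fin: "finite M" and L: "\<Lambda> \<subseteq> M" and tau: "\<tau> \<in> cube \<Lambda>"
    and P: "\<And>\<rho>. P (\<lambda>i. if i\<in>\<Lambda> then \<tau> i else \<rho> i) = P \<rho>"
  shows "prob_ev (M-\<Lambda>) (cond M w \<Lambda> \<tau>) P
       = prob_ev M w (\<lambda>\<sigma>. (\<forall>i\<in>\<Lambda>. \<sigma> i = \<tau> i) \<and> P \<sigma>) / marginal M w \<Lambda> \<tau>"
proof -
  let ?m = "marginal M w \<Lambda> \<tau>"
  let ?mg = "\<lambda>\<rho>. (\<lambda>i. if i\<in>\<Lambda> then \<tau> i else \<rho> i)"
  have fc: "finite (cube (M-\<Lambda>))" "finite (cube M)" using fin by (auto intro: finite_cube)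
  have "prob_ev (M-\<Lambda>) (cond M w \<Lambda> \<tau>) P = (\<Sum>\<rho>\<in>cube (M-\<Lambda>). if P \<rho> then w (?mg \<rho>) / ?m else 0)"
    unfolding prob_ev_def cond_def using fc by (simp add: sum.inter_filter)
  also have "\<dots> = (\<Sum>\<rho>\<in>cube (M-\<Lambda>). (\<lambda>\<sigma>. if P \<sigma> then w \<sigma> else 0) (?mg \<rho>)) / ?m"
    unfolding sum_divide_distrib using P by (intro sum.cong) auto
  also have "(\<Sum>\<rho>\<in>cube (M-\<Lambda>). (\<lambda>\<sigma>. if P \<sigma> then w \<sigma> else 0) (?mg \<rho>))
      = (\<Sum>\<sigma>\<in>{\<sigma>\<in>cube M. \<forall>i\<in>\<Lambda>. \<sigma> i = \<tau> i}. if P \<sigma> then w \<sigma> else 0)"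
    by (rule sum_merge[OF L tau])
  also have "\<dots> = prob_ev M w (\<lambda>\<sigma>. (\<forall>i\<in>\<Lambda>. \<sigma> i = \<tau> i) \<and> P \<sigma>)"
    unfolding prob_ev_def using fc by (simp add: sum.inter_filter) (intro sum.cong; auto)
  finally show ?thesis .
qed

lemma marginal_single: "marginal M w {a} (pin a x) = prob_ev M w (\<lambda>\<sigma>. \<sigma> a = x)"
  unfolding marginal_def pin_def by simp

lemma pin_cube: "pin a x \<in> cube {a} \<longleftrightarrow> x = -1 \<or> x = 1"
  unfolding pin_def cube_def by auto

lemma psi_cor_diag: "psi_cor M w a a = prob_ev M w (\<lambda>\<sigma>. \<sigma> a = -1)"
  unfolding psi_cor_def by (simp add: marginal_single)

lemma psi_cor_off:
  assumes fin: "finite M" and a: "a \<in> M" and b: "b \<in> M" and ab: "a \<noteq> b"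
  shows "psi_cor M w a b = (if 0 < prob_ev M w (\<lambda>\<sigma>. \<sigma> a = 1)
     then prob_ev M w (\<lambda>\<sigma>. \<sigma> a = 1 \<and> \<sigma> b = 1) / prob_ev M w (\<lambda>\<sigma>. \<sigma> a = 1) - prob_ev M w (\<lambda>\<sigma>. \<sigma> b = 1)
     else 0)"
proof -
  have supp: "pin a 1 \<in> support_marg M w {a} \<longleftrightarrow> 0 < prob_ev M w (\<lambda>\<sigma>. \<sigma> a = 1)"
    unfolding support_marg_def using pin_cube[of a 1] by (simp add: marginal_single)
  have "marginal (M - {a}) (cond M w {a} (pin a 1)) {b} (pin b 1)
      = prob_ev (M - {a}) (cond M w {a} (pin a 1)) (\<lambda>\<rho>. \<rho> b = 1)"
    by (rule marginal_single)
  also have "\<dots> = prob_ev M w (\<lambda>\<sigma>. (\<forall>i\<in>{a}. \<sigma> i = pin a 1 i) \<and> \<sigma> b = 1) / marginal M w {a} (pin a 1)"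
    using ab a by (intro prob_ev_cond fin) (auto simp: pin_cube)
  also have "\<dots> = prob_ev M w (\<lambda>\<sigma>. \<sigma> a = 1 \<and> \<sigma> b = 1) / prob_ev M w (\<lambda>\<sigma>. \<sigma> a = 1)"
    unfolding marginal_single by (simp add: pin_def)
  finally show ?thesis unfolding psi_cor_def using ab supp by (simp add: marginal_single)
qed

lemma prob_ev_compl:
  assumes fin: "finite M" and a: "a \<in> M"
  shows "prob_ev M w (\<lambda>\<sigma>. \<sigma> a = -1) = prob_ev M w (\<lambda>\<sigma>. True) - prob_ev M w (\<lambda>\<sigma>. \<sigma> a = 1)"
proof -
  have fc: "finite (cube M)" using fin by (rule finite_cube)
  have "prob_ev M w (\<lambda>\<sigma>. True) = (\<Sum>\<sigma>\<in>cube M. (if \<sigma> a = -1 then w \<sigma> else 0) + (if \<sigma> a = 1 then w \<sigma> else 0))"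
    unfolding prob_ev_def using cube_val[OF _ a] by (intro sum.cong) auto
  also have "\<dots> = prob_ev M w (\<lambda>\<sigma>. \<sigma> a = -1) + prob_ev M w (\<lambda>\<sigma>. \<sigma> a = 1)"
    unfolding prob_ev_def sum.distrib using fc by (simp add: sum.inter_filter)
  finally show ?thesis by simp
qed

lemma prob_ev_tilt:
  "prob_ev M (tilt M lam w) P = prob_ev M (\<lambda>\<sigma>. w \<sigma> * (\<Prod>i\<in>{i\<in>M. \<sigma> i = 1}. lam i)) P
     / (\<Sum>\<sigma>'\<in>cube M. w \<sigma>' * (\<Prod>i\<in>{i\<in>M. \<sigma>' i = 1}. lam i))"
  unfolding prob_ev_def tilt_def by (simp add: sum_divide_distrib)

lemma prob_cond_tilt:
  assumes fin: "finite M" and L: "\<Lambda> \<subseteq> M" and tau: "\<tau> \<in> cube \<Lambda>"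
    and P: "\<And>\<rho>. P (\<lambda>i. if i\<in>\<Lambda> then \<tau> i else \<rho> i) = P \<rho>"
    and pos: "0 < marginal M (tilt M lam w) \<Lambda> \<tau>"
  shows "prob_ev (M-\<Lambda>) (cond M (tilt M lam w) \<Lambda> \<tau>) P
      = prob_ev M (\<lambda>\<sigma>. w \<sigma> * (\<Prod>i\<in>{i\<in>M. \<sigma> i = 1}. lam i)) (\<lambda>\<sigma>. (\<forall>i\<in>\<Lambda>. \<sigma> i = \<tau> i) \<and> P \<sigma>)
      / prob_ev M (\<lambda>\<sigma>. w \<sigma> * (\<Prod>i\<in>{i\<in>M. \<sigma> i = 1}. lam i)) (\<lambda>\<sigma>. \<forall>i\<in>\<Lambda>. \<sigma> i = \<tau> i)"
proof -
  let ?Z = "\<Sum>\<sigma>'\<in>cube M. w \<sigma>' * (\<Prod>i\<in>{i\<in>M. \<sigma>' i = 1}. lam i)"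
  have m: "marginal M (tilt M lam w) \<Lambda> \<tau> = prob_ev M (\<lambda>\<sigma>. w \<sigma> * (\<Prod>i\<in>{i\<in>M. \<sigma> i = 1}. lam i)) (\<lambda>\<sigma>. \<forall>i\<in>\<Lambda>. \<sigma> i = \<tau> i) / ?Z"
    unfolding marginal_def by (rule prob_ev_tilt)
  have Z: "?Z \<noteq> 0" using pos unfolding m by auto
  show ?thesis
    unfolding prob_ev_cond[where P=P, OF fin L tau P] m prob_ev_tilt using Z by simp
qed

lemma block_sum:
  fixes H :: "'i \<Rightarrow> ('j \<Rightarrow> int) \<Rightarrow> real"
  assumes finN: "finite N" and finK: "finite K"
  shows "(\<Sum>Y\<in>cube (N \<times> K). \<Prod>i\<in>N. H i (\<lambda>j. Y (i,j))) = (\<Prod>i\<in>N. \<Sum>y\<in>cube K. H i y)"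
proof -
  have "(\<Prod>i\<in>N. \<Sum>y\<in>cube K. H i y) = (\<Sum>g\<in>PiE N (\<lambda>_. cube K). \<Prod>i\<in>N. H i (g i))"
    using finN finK by (intro prod_sum_PiE) (auto intro: finite_cube)
  also have "\<dots> = (\<Sum>Y\<in>cube (N \<times> K). \<Prod>i\<in>N. H i (\<lambda>j. Y (i,j)))"
  proof (rule sum.reindex_bij_witness[of _ "\<lambda>Y i. if i \<in> N then (\<lambda>j. Y (i,j)) else undefined"
        "\<lambda>g (i,j). if i \<in> N then g i j else undefined"])
    fix g assume g: "g \<in> PiE N (\<lambda>_. cube K)"
    show "(\<lambda>i. if i \<in> N then (\<lambda>j. (case (i, j) of (i, j) \<Rightarrow> if i \<in> N then g i j else undefined)) else undefined) = g"
      using g by (auto simp: PiE_def extensional_def)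
    show "(\<lambda>(i, j). if i \<in> N then g i j else undefined) \<in> cube (N \<times> K)"
      using g by (auto simp: cube_def PiE_def extensional_def Pi_def)
  next
    fix Y assume Y: "Y \<in> cube (N \<times> K)"
    show "(\<lambda>(i, j). if i \<in> N then (if i \<in> N then (\<lambda>j. Y (i, j)) else undefined) j else undefined) = Y"
      using Y by (auto simp: cube_def PiE_def extensional_def)
    show "(\<lambda>i. if i \<in> N then (\<lambda>j. Y (i, j)) else undefined) \<in> PiE N (\<lambda>_. cube K)"
      using Y by (auto simp: cube_def PiE_def extensional_def Pi_def)
  next
    fix g assume g: "g \<in> PiE N (\<lambda>_. cube K)"
    show "(\<Prod>i\<in>N. H i (\<lambda>j. (\<lambda>(i,j). if i \<in> N then g i j else undefined) (i,j))) = (\<Prod>i\<in>N. H i (g i))"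
      by (rule prod.cong) (auto simp: fun_eq_iff)
  qed
  finally show ?thesis by simp
qed

lemma block_minus:
  fixes \<phi> :: "'j \<Rightarrow> int \<Rightarrow> real"
  assumes finK: "finite K"
  shows "(\<Sum>y\<in>cube K. (if \<forall>j\<in>K. y j = -1 then 1 else 0) * (\<Prod>j\<in>K. \<phi> j (y j))) = (\<Prod>j\<in>K. \<phi> j (-1))"
proof -
  let ?y0 = "restrict (\<lambda>_. -1::int) K"
  have set: "{y\<in>cube K. \<forall>j\<in>K. y j = -1} = {?y0}"
    by (auto simp: cube_def PiE_def extensional_def)
  have "(\<Sum>y\<in>cube K. (if \<forall>j\<in>K. y j = -1 then 1 else 0) * (\<Prod>j\<in>K. \<phi> j (y j)))
      = (\<Sum>y\<in>cube K. if \<forall>j\<in>K. y j = -1 then (\<Prod>j\<in>K. \<phi> j (y j)) else 0)"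
    by (intro sum.cong) auto
  also have "\<dots> = (\<Sum>y\<in>{y\<in>cube K. \<forall>j\<in>K. y j = -1}. (\<Prod>j\<in>K. \<phi> j (y j)))"
    by (rule sum.inter_filter[symmetric]) (rule finite_cube[OF finK])
  also have "\<dots> = (\<Prod>j\<in>K. \<phi> j (-1))" unfolding set by simp
  finally show ?thesis .
qed

lemma block_plus_set:
  assumes finK: "finite K"
  shows "{y\<in>cube K. card {j\<in>K. y j = 1} = 1} = (\<lambda>j0. restrict (\<lambda>j. if j = j0 then (1::int) else -1) K) ` K"
proof (intro equalityI subsetI)
  fix y assume y: "y \<in> {y\<in>cube K. card {j\<in>K. y j = 1} = 1}"
  then have yc: "y \<in> cube K" and c1: "card {j\<in>K. y j = 1} = 1" by auto
  obtain j0 where j0: "{j\<in>K. y j = 1} = {j0}" using card_1_singletonE[OF c1] by blast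
  have y1: "y j = 1 \<longleftrightarrow> j = j0" if "j \<in> K" for j
  proof -
    have "j \<in> {j\<in>K. y j = 1} \<longleftrightarrow> j \<in> {j0}" using j0 by (rule arg_cong)
    then show ?thesis using that by simp
  qed
  have j0K: "j0 \<in> K" using j0 by blast
  have "y = restrict (\<lambda>j. if j = j0 then (1::int) else -1) K"
  proof
    fix j show "y j = restrict (\<lambda>j. if j = j0 then (1::int) else -1) K j"
    proof (cases "j \<in> K")
      case True
      then have "y j = -1 \<or> y j = 1" using cube_val[OF yc] by blast
      then show ?thesis using y1[OF True] True by (auto simp: restrict_def)
    next
      case False
      then show ?thesis using cube_out[OF yc False] by (simp add: restrict_def)
    qed
  qed
  then show "y \<in> (\<lambda>j0. restrict (\<lambda>j. if j = j0 then (1::int) else -1) K) ` K" using j0K by blast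
next
  fix y assume "y \<in> (\<lambda>j0. restrict (\<lambda>j. if j = j0 then (1::int) else -1) K) ` K"
  then obtain j0 where j0: "j0 \<in> K" "y = restrict (\<lambda>j. if j = j0 then (1::int) else -1) K" by blast
  have "{j\<in>K. y j = 1} = {j0}" using j0 by (auto simp: restrict_def)
  moreover have "y \<in> cube K" using j0 unfolding cube_def by (simp add: restrict_PiE_iff)
  ultimately show "y \<in> {y\<in>cube K. card {j\<in>K. y j = 1} = 1}" by simp
qed

lemma block_plus:
  fixes \<phi> :: "'j \<Rightarrow> int \<Rightarrow> real"
  assumes finK: "finite K"
  shows "(\<Sum>y\<in>cube K. (if card {j\<in>K. y j = 1} = 1 then c else 0) * (\<Prod>j\<in>K. \<phi> j (y j)))
       = c * (\<Sum>j0\<in>K. \<phi> j0 1 * (\<Prod>j\<in>K-{j0}. \<phi> j (-1)))"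
proof -
  define e where "e = (\<lambda>j0. restrict (\<lambda>j. if j = j0 then (1::int) else -1) K)"
  have set: "{y\<in>cube K. card {j\<in>K. y j = 1} = 1} = e ` K"
    unfolding e_def by (rule block_plus_set[OF finK])
  have inj: "inj_on e K"
  proof
    fix a b assume ab: "a \<in> K" "b \<in> K" "e a = e b"
    then have "e a a = e b a" by simp
    then show "a = b" using ab unfolding e_def by (simp add: restrict_def split: if_splits)
  qed
  have "(\<Sum>y\<in>cube K. (if card {j\<in>K. y j = 1} = 1 then c else 0) * (\<Prod>j\<in>K. \<phi> j (y j)))
      = (\<Sum>y\<in>cube K. if card {j\<in>K. y j = 1} = 1 then c * (\<Prod>j\<in>K. \<phi> j (y j)) else 0)"
    by (intro sum.cong) auto
  also have "\<dots> = (\<Sum>y\<in>{y\<in>cube K. card {j\<in>K. y j = 1} = 1}. c * (\<Prod>j\<in>K. \<phi> j (y j)))"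
    by (rule sum.inter_filter[symmetric]) (rule finite_cube[OF finK])
  also have "\<dots> = (\<Sum>j0\<in>K. c * (\<Prod>j\<in>K. \<phi> j (e j0 j)))"
    unfolding set by (rule sum.reindex[OF inj, unfolded comp_def])
  also have "\<dots> = (\<Sum>j0\<in>K. c * (\<phi> j0 1 * (\<Prod>j\<in>K-{j0}. \<phi> j (-1))))"
  proof (intro sum.cong refl)
    fix j0 assume j0: "j0 \<in> K"
    have "(\<Prod>j\<in>K. \<phi> j (e j0 j)) = \<phi> j0 (e j0 j0) * (\<Prod>j\<in>K-{j0}. \<phi> j (e j0 j))"
      using finK j0 by (rule prod.remove)
    also have "\<dots> = \<phi> j0 1 * (\<Prod>j\<in>K-{j0}. \<phi> j (-1))"
    proof -
      have "e j0 j0 = 1" using j0 unfolding e_def by simp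
      moreover have "(\<Prod>j\<in>K-{j0}. \<phi> j (e j0 j)) = (\<Prod>j\<in>K-{j0}. \<phi> j (-1))"
        by (rule prod.cong) (auto simp: e_def)
      ultimately show ?thesis by simp
    qed
    finally show "c * (\<Prod>j\<in>K. \<phi> j (e j0 j)) = c * (\<phi> j0 1 * (\<Prod>j\<in>K-{j0}. \<phi> j (-1)))" by simp
  qed
  also have "\<dots> = c * (\<Sum>j0\<in>K. \<phi> j0 1 * (\<Prod>j\<in>K-{j0}. \<phi> j (-1)))" by (simp add: sum_distrib_left)
  finally show ?thesis .
qed

definition Gf :: "nat \<Rightarrow> ('i \<times> nat \<Rightarrow> int \<Rightarrow> real) \<Rightarrow> 'i \<Rightarrow> int \<Rightarrow> real" where
  "Gf k \<phi> i x = (if x = 1 then (1 / real k) * (\<Sum>j\<in>{1..k}. \<phi> (i,j) 1 * (\<Prod>j'\<in>{1..k}-{j}. \<phi> (i,j') (-1)))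
      else (\<Prod>j\<in>{1..k}. \<phi> (i,j) (-1)))"

lemma Rd_factor:
  fixes \<phi> :: "'i \<times> nat \<Rightarrow> int \<Rightarrow> real"
  assumes finN: "finite N"
  shows "(\<Sum>Y\<in>cube (N \<times> {1..k}). Rd N k \<mu> Y * (\<Prod>a\<in>N \<times> {1..k}. \<phi> a (Y a)))
       = (\<Sum>X\<in>cube N. \<mu> X * (\<Prod>i\<in>N. Gf k \<phi> i (X i)))"
proof -
  let ?K = "{1..k}"
  define ker where "ker = (\<lambda>(x::int) (y::nat \<Rightarrow> int). if x = -1
               then (if \<forall>j\<in>?K. y j = -1 then 1 else 0)
               else (if card {j\<in>?K. y j = 1} = 1 then 1 / real k else (0::real)))"
  have prodsplit: "(\<Prod>a\<in>N \<times> ?K. \<phi> a (Y a)) = (\<Prod>i\<in>N. \<Prod>j\<in>?K. \<phi> (i,j) (Y (i,j)))" for Y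
    by (simp add: prod.cartesian_product)
  have "(\<Sum>Y\<in>cube (N \<times> ?K). Rd N k \<mu> Y * (\<Prod>a\<in>N \<times> ?K. \<phi> a (Y a)))
     = (\<Sum>Y\<in>cube (N \<times> ?K). \<Sum>X\<in>cube N. \<mu> X * (\<Prod>i\<in>N. ker (X i) (\<lambda>j. Y (i,j)) * (\<Prod>j\<in>?K. \<phi> (i,j) (Y (i,j)))))"
    unfolding Rd_def prodsplit sum_distrib_right
    by (intro sum.cong refl) (simp add: prod.distrib ker_def mult.assoc)
  also have "\<dots> = (\<Sum>X\<in>cube N. \<mu> X * (\<Sum>Y\<in>cube (N \<times> ?K). \<Prod>i\<in>N. ker (X i) (\<lambda>j. Y (i,j)) * (\<Prod>j\<in>?K. \<phi> (i,j) (Y (i,j)))))"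
    by (subst sum.swap) (simp add: sum_distrib_left)
  also have "\<dots> = (\<Sum>X\<in>cube N. \<mu> X * (\<Prod>i\<in>N. \<Sum>y\<in>cube ?K. ker (X i) y * (\<Prod>j\<in>?K. \<phi> (i,j) (y j))))"
  proof (intro sum.cong refl arg_cong2[where f="(*)"])
    fix X
    show "(\<Sum>Y\<in>cube (N \<times> ?K). \<Prod>i\<in>N. ker (X i) (\<lambda>j. Y (i,j)) * (\<Prod>j\<in>?K. \<phi> (i,j) (Y (i,j))))
        = (\<Prod>i\<in>N. \<Sum>y\<in>cube ?K. ker (X i) y * (\<Prod>j\<in>?K. \<phi> (i,j) (y j)))"
      using block_sum[OF finN, of ?K "\<lambda>i y. ker (X i) y * (\<Prod>j\<in>?K. \<phi> (i,j) (y j))"] by simp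
  qed
  also have "\<dots> = (\<Sum>X\<in>cube N. \<mu> X * (\<Prod>i\<in>N. Gf k \<phi> i (X i)))"
  proof (intro sum.cong refl arg_cong2[where f="(*)"] prod.cong)
    fix X i assume X: "X \<in> cube N" and i: "i \<in> N"
    show "(\<Sum>y\<in>cube ?K. ker (X i) y * (\<Prod>j\<in>?K. \<phi> (i,j) (y j))) = Gf k \<phi> i (X i)"
    proof (cases "X i = 1")
      case True
      then show ?thesis unfolding ker_def Gf_def
        using block_plus[of ?K "1 / real k" "\<lambda>j. \<phi> (i,j)"] by simp
    next
      case False
      then have "X i = -1" using cube_val[OF X i] by auto
      then show ?thesis unfolding ker_def Gf_def
        using block_minus[of ?K "\<lambda>j. \<phi> (i,j)"] by simp
    qed
  qed
  finally show ?thesis .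
qed

lemma prod_indicator:
  assumes "finite A"
  shows "(\<Prod>a\<in>A. if P a then 1 else 0) = (if \<forall>a\<in>A. P a then 1 else (0::real))"
  using assms by (induction A rule: finite_induct) auto

lemma weight_prod:
  fixes w :: "('a \<Rightarrow> int) \<Rightarrow> real"
  assumes fin: "finite M" and L: "L \<subseteq> M" and S: "S \<subseteq> M"
  shows "prob_ev M (\<lambda>\<sigma>. w \<sigma> * (\<Prod>i\<in>{i\<in>M. \<sigma> i = 1}. l i)) (\<lambda>\<sigma>. (\<forall>i\<in>L. \<sigma> i = t i) \<and> (\<forall>i\<in>S. \<sigma> i = 1))
     = (\<Sum>\<sigma>\<in>cube M. w \<sigma> * (\<Prod>i\<in>M. (if \<sigma> i = 1 then l i else 1) * (if i\<in>L then (if \<sigma> i = t i then 1 else 0) else 1)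
            * (if i\<in>S then (if \<sigma> i = 1 then 1 else 0) else 1)))"
proof -
  have fc: "finite (cube M)" using fin by (rule finite_cube)
  have pw: "(\<Prod>i\<in>M. (if \<sigma> i = 1 then l i else 1) * (if i\<in>L then (if \<sigma> i = t i then 1 else 0) else 1)
            * (if i\<in>S then (if \<sigma> i = 1 then 1 else 0) else 1))
       = (if (\<forall>i\<in>L. \<sigma> i = t i) \<and> (\<forall>i\<in>S. \<sigma> i = 1) then (\<Prod>i\<in>{i\<in>M. \<sigma> i = 1}. l i) else 0)" for \<sigma>
  proof -
    have e1: "(\<Prod>i\<in>M. (if \<sigma> i = 1 then l i else 1)) = (\<Prod>i\<in>{i\<in>M. \<sigma> i = 1}. l i)"
      using fin by (simp add: prod.inter_filter)
    have e2: "(\<Prod>i\<in>M. (if i\<in>L then (if \<sigma> i = t i then 1 else 0) else 1)) = (if \<forall>i\<in>L. \<sigma> i = t i then 1 else (0::real))"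
    proof -
      have "(\<Prod>i\<in>M. (if i\<in>L then (if \<sigma> i = t i then 1 else 0) else 1)) = (\<Prod>i\<in>M. if i \<in> L \<longrightarrow> \<sigma> i = t i then 1 else (0::real))"
        by (intro prod.cong) auto
      also have "\<dots> = (if \<forall>i\<in>M. i \<in> L \<longrightarrow> \<sigma> i = t i then 1 else 0)" by (rule prod_indicator[OF fin])
      finally show ?thesis using L by auto
    qed
    have e3: "(\<Prod>i\<in>M. (if i\<in>S then (if \<sigma> i = 1 then 1 else 0) else 1)) = (if \<forall>i\<in>S. \<sigma> i = 1 then 1 else (0::real))"
    proof -
      have "(\<Prod>i\<in>M. (if i\<in>S then (if \<sigma> i = 1 then 1 else 0) else 1)) = (\<Prod>i\<in>M. if i \<in> S \<longrightarrow> \<sigma> i = 1 then 1 else (0::real))"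
        by (intro prod.cong) auto
      also have "\<dots> = (if \<forall>i\<in>M. i \<in> S \<longrightarrow> \<sigma> i = 1 then 1 else 0)" by (rule prod_indicator[OF fin])
      finally show ?thesis using S by auto
    qed
    show ?thesis unfolding prod.distrib e1 e2 e3 by simp
  qed
  show ?thesis unfolding prob_ev_def pw
    using fc by (simp add: sum.inter_filter if_distrib cong: if_cong)
qed

locale rdsetup =
  fixes n k :: nat and \<mu> :: "(nat \<Rightarrow> int) \<Rightarrow> real" and lam :: "nat \<times> nat \<Rightarrow> real"
    and \<Lambda> :: "(nat \<times> nat) set" and \<tau> :: "nat \<times> nat \<Rightarrow> int"
  assumes dist: "is_dist {1..n} \<mu>" and k: "k \<ge> 1"
    and lam: "\<And>a. a \<in> {1..n} \<times> {1..k} \<Longrightarrow> 0 < lam a"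
    and LJ: "\<Lambda> \<subseteq> {1..n} \<times> {1..k}"
    and tau: "\<tau> \<in> support_marg ({1..n} \<times> {1..k}) (tilt ({1..n} \<times> {1..k}) lam (Rd {1..n} k \<mu>)) \<Lambda>"
begin

abbreviation "NN \<equiv> {1..n}"
abbreviation "KK \<equiv> {1..k}"
abbreviation "J0 \<equiv> NN \<times> KK"
abbreviation "JJ \<equiv> J0 - \<Lambda>"

definition "Plus i = {j\<in>KK. (i,j) \<in> \<Lambda> \<and> \<tau> (i,j) = 1}"
definition "Minus i = {j\<in>KK. (i,j) \<in> \<Lambda> \<and> \<tau> (i,j) = -1}"
definition "U i = {j\<in>KK. (i,j) \<notin> \<Lambda>}"
definition "Lp = {i\<in>NN. Plus i \<noteq> {} \<or> U i = {}}"
abbreviation "N' \<equiv> NN - Lp"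
definition "tau' = restrict (\<lambda>i. if Plus i \<noteq> {} then 1 else -1) Lp"
definition "lam' i = (if i \<in> Lp then 1 else (1 / real k) * (\<Sum>j\<in>U i. lam (i,j)))"
definition "q i j = lam (i,j) / (\<Sum>j'\<in>U i. lam (i,j'))"

definition "phi S a v = (if v = 1 then lam a else 1) * (if a\<in>\<Lambda> then (if v = \<tau> a then 1 else 0) else 1)
     * (if a\<in>S then (if v = 1 then 1 else 0) else (1::real))"
definition "hh Q i v = (if v = 1 then lam' i else 1) * (if i\<in>Lp then (if v = tau' i then 1 else 0) else 1)
     * (if i\<in>Q then (if v = 1 then 1 else 0) else (1::real))"
definition "W S = (\<Sum>X\<in>cube NN. \<mu> X * (\<Prod>i\<in>NN. Gf k (phi S) i (X i)))"
definition "Hm Q = (\<Sum>X\<in>cube NN. \<mu> X * (\<Prod>i\<in>NN. hh Q i (X i)))"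
definition "cc i = (if i \<in> Lp then Gf k (phi {}) i (tau' i) else 1)"

lemma tau_cube: "\<tau> \<in> cube \<Lambda>"
  using tau unfolding support_marg_def by auto

lemma tau_val: "a \<in> \<Lambda> \<Longrightarrow> \<tau> a = -1 \<or> \<tau> a = 1"
  using cube_val[OF tau_cube] by blast

lemma tau'_cube: "tau' \<in> cube Lp"
  unfolding tau'_def cube_def by auto

lemma KK_split: "j \<in> KK \<Longrightarrow> j \<in> Plus i \<or> j \<in> Minus i \<or> j \<in> U i"
  using tau_val[of "(i,j)"] unfolding Plus_def Minus_def U_def by auto

lemma phi_minus: "phi S (i,j) (-1) = (if j \<in> Plus i \<or> (i,j) \<in> S then 0 else 1)" if "j \<in> KK"
  using that tau_val[of "(i,j)"] unfolding phi_def Plus_def by auto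

lemma phi_plus: "phi S (i,j) 1 = (if j \<in> Minus i then 0 else lam (i,j))" if "j \<in> KK"
  using that tau_val[of "(i,j)"] unfolding phi_def Minus_def by auto

lemma Gf_minus: "Gf k (phi S) i (-1) = (if \<exists>j\<in>KK. j \<in> Plus i \<or> (i,j) \<in> S then 0 else 1)"
proof -
  have "Gf k (phi S) i (-1) = (\<Prod>j\<in>KK. phi S (i,j) (-1))"
    unfolding Gf_def by simp
  also have "\<dots> = (\<Prod>j\<in>KK. if j \<in> Plus i \<or> (i,j) \<in> S then 0 else 1)"
    by (rule prod.cong[OF refl]) (rule phi_minus, simp)
  also have "\<dots> = (\<Prod>j\<in>KK. if \<not> (j \<in> Plus i \<or> (i,j) \<in> S) then 1 else 0)"
    by (intro prod.cong) auto
  also have "\<dots> = (if \<forall>j\<in>KK. \<not> (j \<in> Plus i \<or> (i,j) \<in> S) then 1 else 0)"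
    by (rule prod_indicator) simp
  finally show ?thesis by auto
qed

lemma Gf_plus: "Gf k (phi S) i 1 = (1 / real k) * (\<Sum>j\<in>KK. (if j \<in> Minus i then 0 else lam (i,j))
      * (if \<exists>j'\<in>KK-{j}. j' \<in> Plus i \<or> (i,j') \<in> S then 0 else 1))"
proof -
  have "(\<Prod>j'\<in>KK-{j}. phi S (i,j') (-1)) = (if \<exists>j'\<in>KK-{j}. j' \<in> Plus i \<or> (i,j') \<in> S then 0 else 1)" for j
  proof -
    have "(\<Prod>j'\<in>KK-{j}. phi S (i,j') (-1)) = (\<Prod>j'\<in>KK-{j}. if \<not> (j' \<in> Plus i \<or> (i,j') \<in> S) then 1 else 0)"
      by (intro prod.cong) (auto simp: phi_minus)
    also have "\<dots> = (if \<forall>j'\<in>KK-{j}. \<not> (j' \<in> Plus i \<or> (i,j') \<in> S) then 1 else 0)"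
      by (rule prod_indicator) simp
    finally show ?thesis by auto
  qed
  note X = this
  have "Gf k (phi S) i 1 = (1 / real k) * (\<Sum>j\<in>KK. phi S (i,j) 1 * (\<Prod>j'\<in>KK-{j}. phi S (i,j') (-1)))"
    unfolding Gf_def by simp
  also have "\<dots> = (1 / real k) * (\<Sum>j\<in>KK. (if j \<in> Minus i then 0 else lam (i,j))
      * (if \<exists>j'\<in>KK-{j}. j' \<in> Plus i \<or> (i,j') \<in> S then 0 else 1))"
    by (intro arg_cong2[where f="(*)"] refl sum.cong) (simp_all only: X phi_plus)
  finally show ?thesis .
qed

lemma N'_props: "i \<in> N' \<Longrightarrow> Plus i = {} \<and> U i \<noteq> {}"
  unfolding Lp_def by auto

lemma sumU_pos: "i \<in> NN \<Longrightarrow> U i \<noteq> {} \<Longrightarrow> 0 < (\<Sum>j\<in>U i. lam (i,j))"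
  by (intro sum_pos) (auto simp: U_def intro!: lam)

lemma sum_noMinus:
  assumes "Plus i = {}"
  shows "(\<Sum>j\<in>KK. (if j \<in> Minus i then 0 else lam (i,j))) = (\<Sum>j\<in>U i. lam (i,j))"
proof -
  have "(\<Sum>j\<in>KK. (if j \<in> Minus i then 0 else lam (i,j))) = (\<Sum>j\<in>KK. if j \<in> U i then lam (i,j) else 0)"
  proof (rule sum.cong[OF refl])
    fix j assume j: "j \<in> KK"
    have "j \<in> Minus i \<longleftrightarrow> j \<notin> U i" using KK_split[OF j, of i] assms unfolding Minus_def U_def by auto
    then show "(if j \<in> Minus i then 0 else lam (i,j)) = (if j \<in> U i then lam (i,j) else 0)" by simp
  qed
  also have "\<dots> = (\<Sum>j\<in>{j\<in>KK. j \<in> U i}. lam (i,j))" by (rule sum.inter_filter[symmetric]) simp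
  also have "{j\<in>KK. j \<in> U i} = U i" unfolding U_def by auto
  finally show ?thesis .
qed

lemma blk_a:
  assumes i: "i \<in> N'" and S: "\<And>j. (i,j) \<notin> S" and Q: "i \<notin> Q" and v: "v = -1 \<or> v = 1"
  shows "Gf k (phi S) i v = hh Q i v"
proof -
  have P: "Plus i = {}" using N'_props[OF i] by blast
  have iL: "i \<notin> Lp" using i by blast
  show ?thesis using v
  proof
    assume v: "v = -1"
    show ?thesis unfolding v Gf_minus using P S iL Q by (simp add: hh_def)
  next
    assume v: "v = 1"
    have "Gf k (phi S) i 1 = (1 / real k) * (\<Sum>j\<in>KK. (if j \<in> Minus i then 0 else lam (i,j)))"
      unfolding Gf_plus using P S by simp
    also have "\<dots> = lam' i" unfolding sum_noMinus[OF P] lam'_def using iL by simp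
    finally show ?thesis unfolding v using iL Q by (simp add: hh_def)
  qed
qed

lemma blk_b:
  assumes i: "i \<in> N'" and S: "\<And>j. (i,j) \<in> S \<longleftrightarrow> j = j0" and j0: "j0 \<in> U i" and Q: "i \<in> Q"
    and v: "v = -1 \<or> v = 1"
  shows "Gf k (phi S) i v = q i j0 * hh Q i v"
proof -
  have P: "Plus i = {}" and Une: "U i \<noteq> {}" using N'_props[OF i] by blast+
  have iL: "i \<notin> Lp" using i by blast
  have j0K: "j0 \<in> KK" and j0M: "j0 \<notin> Minus i" using j0 unfolding U_def Minus_def by auto
  have iN: "i \<in> NN" using i by blast
  show ?thesis using v
  proof
    assume v: "v = -1"
    show ?thesis unfolding v Gf_minus using S j0K Q by (auto simp: hh_def)
  next
    assume v: "v = 1"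
    have "Gf k (phi S) i 1 = (1 / real k) * (\<Sum>j\<in>KK. if j = j0 then lam (i,j0) else 0)"
      unfolding Gf_plus
    proof (intro arg_cong2[where f="(*)"] refl sum.cong)
      fix j assume j: "j \<in> KK"
      have "(\<exists>j'\<in>KK-{j}. j' \<in> Plus i \<or> (i,j') \<in> S) \<longleftrightarrow> j \<noteq> j0" using S P j0K by auto
      then show "(if j \<in> Minus i then 0 else lam (i,j)) * (if \<exists>j'\<in>KK-{j}. j' \<in> Plus i \<or> (i,j') \<in> S then 0 else 1)
          = (if j = j0 then lam (i,j0) else 0)" using j0M by auto
    qed
    also have "\<dots> = lam (i,j0) / real k" using j0K by simp
    also have "\<dots> = q i j0 * lam' i"
      using sumU_pos[OF iN Une] iL unfolding q_def lam'_def by simp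
    finally show ?thesis unfolding v using iL Q by (simp add: hh_def)
  qed
qed

lemma Gf_cong: "(\<And>j. \<phi> (i,j) = \<psi> (i,j)) \<Longrightarrow> Gf k \<phi> i = Gf k \<psi> i"
  unfolding Gf_def by (intro ext) simp

lemma blk_c:
  assumes i: "i \<in> Lp" and S: "\<And>j. (i,j) \<notin> S" and Q: "i \<notin> Q" and v: "v = -1 \<or> v = 1"
  shows "Gf k (phi S) i v = cc i * hh Q i v"
proof -
  have G: "Gf k (phi S) i = Gf k (phi {}) i"
    by (rule Gf_cong) (auto simp: phi_def S fun_eq_iff)
  have hh: "hh Q i v = (if v = tau' i then 1 else 0)" using i Q unfolding hh_def lam'_def by simp
  have z: "Gf k (phi {}) i v = 0" if "v \<noteq> tau' i"
  proof (cases "Plus i = {}")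
    case False
    then have "v = -1" using that v i unfolding tau'_def by auto
    moreover have "\<exists>j\<in>KK. j \<in> Plus i" using False unfolding Plus_def by auto
    ultimately show ?thesis by (auto simp: Gf_minus)
  next
    case True
    then have "v = 1" using that v i unfolding tau'_def by auto
    have "U i = {}" using True i unfolding Lp_def by auto
    then have "\<And>j. j \<in> KK \<Longrightarrow> j \<in> Minus i" using KK_split True by blast
    then show ?thesis unfolding \<open>v = 1\<close> Gf_plus by simp
  qed
  show ?thesis unfolding G hh cc_def using i z by auto
qed

lemma blk_d:
  assumes S: "(i,j0) \<in> S" "(i,j1) \<in> S" and j01: "j0 \<noteq> j1" "j0 \<in> KK" "j1 \<in> KK"
    and that: "v = -1 \<or> v = 1"
  shows "Gf k (phi S) i v = 0"
  using that
proof
  assume "v = -1" then show ?thesis using S j01 by (auto simp: Gf_minus)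
next
  assume v: "v = 1"
  have "\<And>j. \<exists>j'\<in>KK-{j}. j' \<in> Plus i \<or> (i,j') \<in> S" using S j01 by (metis Diff_iff singletonD)
  then show ?thesis unfolding v Gf_plus by simp
qed

lemma blk_e:
  assumes i: "i \<in> Lp" and S: "(i,j0) \<in> S" and SJ: "S \<subseteq> JJ" and that: "v = -1 \<or> v = 1"
  shows "Gf k (phi S) i v = 0"
proof -
  have j0: "j0 \<in> KK" "(i,j0) \<notin> \<Lambda>" using S SJ by auto
  then have "j0 \<in> U i" unfolding U_def by auto
  then have "Plus i \<noteq> {}" using i unfolding Lp_def by auto
  then obtain p where p: "p \<in> Plus i" by blast
  have pK: "p \<in> KK" "(i,p) \<in> \<Lambda>" using p unfolding Plus_def by auto
  show ?thesis using that
  proof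
    assume "v = -1" then show ?thesis using p pK by (auto simp: Gf_minus)
  next
    assume v: "v = 1"
    have "\<exists>j'\<in>KK-{j}. j' \<in> Plus i \<or> (i,j') \<in> S" for j
    proof (cases "j = p")
      case True
      then have "j0 \<noteq> j" using j0 pK by auto
      then show ?thesis using j0 S by auto
    next
      case False
      then show ?thesis using p pK by auto
    qed
    then show ?thesis unfolding v Gf_plus by simp
  qed
qed

lemma GEN:
  assumes "\<And>i v. i \<in> NN \<Longrightarrow> v = -1 \<or> v = 1 \<Longrightarrow> Gf k (phi S) i v = \<alpha> i * hh Q i v"
  shows "W S = (\<Prod>i\<in>NN. \<alpha> i) * Hm Q"
proof -
  have "W S = (\<Sum>X\<in>cube NN. \<mu> X * (\<Prod>i\<in>NN. \<alpha> i * hh Q i (X i)))"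
    unfolding W_def
  proof (intro sum.cong refl arg_cong2[where f="(*)"] prod.cong)
    fix X i assume X: "X \<in> cube NN" and i: "i \<in> NN"
    show "Gf k (phi S) i (X i) = \<alpha> i * hh Q i (X i)" by (rule assms[OF i cube_val[OF X i]])
  qed
  also have "\<dots> = (\<Prod>i\<in>NN. \<alpha> i) * Hm Q"
    unfolding Hm_def prod.distrib sum_distrib_left by (simp add: ac_simps)
  finally show ?thesis .
qed

lemma ZERO:
  assumes i: "i \<in> NN" and z: "\<And>v. v = -1 \<or> v = 1 \<Longrightarrow> Gf k (phi S) i v = 0"
  shows "W S = 0"
  unfolding W_def
proof (intro sum.neutral ballI)
  fix X assume X: "X \<in> cube NN"
  have "Gf k (phi S) i (X i) = 0" using z cube_val[OF X i] by blast
  then have "(\<Prod>i\<in>NN. Gf k (phi S) i (X i)) = 0" using i by (intro prod_zero) auto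
  then show "\<mu> X * (\<Prod>i\<in>NN. Gf k (phi S) i (X i)) = 0" by simp
qed

definition "CC = (\<Prod>i\<in>NN. cc i)"

lemma cc_free: "i \<notin> Lp \<Longrightarrow> cc i = 1" unfolding cc_def by simp

lemma E0: "W {} = CC * Hm {}"
  unfolding CC_def
proof (rule GEN)
  fix i and v :: int assume i: "i \<in> NN" and v: "v = -1 \<or> v = 1"
  show "Gf k (phi {}) i v = cc i * hh {} i v"
  proof (cases "i \<in> Lp")
    case True then show ?thesis using blk_c v by auto
  next
    case False then show ?thesis using blk_a[of i "{}" "{}" v] v i cc_free by auto
  qed
qed

lemma E1:
  assumes i0: "i0 \<in> N'" and j0: "j0 \<in> U i0"
  shows "W {(i0,j0)} = CC * q i0 j0 * Hm {i0}"
proof -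
  have "W {(i0,j0)} = (\<Prod>i\<in>NN. cc i * (if i = i0 then q i0 j0 else 1)) * Hm {i0}"
  proof (rule GEN)
    fix i and v :: int assume i: "i \<in> NN" and v: "v = -1 \<or> v = 1"
    show "Gf k (phi {(i0,j0)}) i v = cc i * (if i = i0 then q i0 j0 else 1) * hh {i0} i v"
    proof (cases "i = i0")
      case True
      then show ?thesis using blk_b[of i0 "{(i0,j0)}" j0 "{i0}" v] i0 j0 v cc_free by auto
    next
      case False
      show ?thesis
      proof (cases "i \<in> Lp")
        case True then show ?thesis using blk_c[of i "{(i0,j0)}" "{i0}" v] False v by auto
      next
        case nL: False
        then show ?thesis using blk_a[of i "{(i0,j0)}" "{i0}" v] False v i cc_free by auto
      qed
    qed
  qed
  also have "(\<Prod>i\<in>NN. cc i * (if i = i0 then q i0 j0 else 1)) = CC * q i0 j0"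
    unfolding CC_def prod.distrib using i0 by (simp add: prod.delta)
  finally show ?thesis .
qed

lemma E2:
  assumes i0: "i0 \<in> N'" and j0: "j0 \<in> U i0" and i1: "i1 \<in> N'" and j1: "j1 \<in> U i1" and ne: "i0 \<noteq> i1"
  shows "W {(i0,j0),(i1,j1)} = CC * q i0 j0 * q i1 j1 * Hm {i0,i1}"
proof -
  have "W {(i0,j0),(i1,j1)} = (\<Prod>i\<in>NN. cc i * ((if i = i0 then q i0 j0 else 1) * (if i = i1 then q i1 j1 else 1))) * Hm {i0,i1}"
  proof (rule GEN)
    fix i and v :: int assume i: "i \<in> NN" and v: "v = -1 \<or> v = 1"
    show "Gf k (phi {(i0,j0),(i1,j1)}) i v = cc i * ((if i = i0 then q i0 j0 else 1) * (if i = i1 then q i1 j1 else 1)) * hh {i0,i1} i v"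
    proof (cases "i = i0")
      case True
      then show ?thesis using blk_b[of i0 "{(i0,j0),(i1,j1)}" j0 "{i0,i1}" v] i0 j0 v cc_free ne by auto
    next
      case F0: False
      show ?thesis
      proof (cases "i = i1")
        case True
        then show ?thesis using blk_b[of i1 "{(i0,j0),(i1,j1)}" j1 "{i0,i1}" v] i1 j1 v cc_free ne by auto
      next
        case F1: False
        show ?thesis
        proof (cases "i \<in> Lp")
          case True then show ?thesis using blk_c[of i "{(i0,j0),(i1,j1)}" "{i0,i1}" v] F0 F1 v by auto
        next
          case nL: False
          then show ?thesis using blk_a[of i "{(i0,j0),(i1,j1)}" "{i0,i1}" v] F0 F1 v i cc_free by auto
        qed
      qed
    qed
  qed
  also have "(\<Prod>i\<in>NN. cc i * ((if i = i0 then q i0 j0 else 1) * (if i = i1 then q i1 j1 else 1))) = CC * q i0 j0 * q i1 j1"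
    unfolding CC_def prod.distrib using i0 i1 by (simp add: prod.delta)
  finally show ?thesis .
qed

lemma E3:
  assumes i0: "i0 \<in> NN" and j: "j0 \<in> KK" "j1 \<in> KK" "j0 \<noteq> j1"
  shows "W {(i0,j0),(i0,j1)} = 0"
  by (rule ZERO[OF i0]) (rule blk_d[of i0 j0 _ j1], use j in auto)

lemma E4:
  assumes i0: "i0 \<in> Lp" and a: "(i0,j0) \<in> JJ"
  shows "W {(i0,j0)} = 0"
proof (rule ZERO)
  show "i0 \<in> NN" using i0 unfolding Lp_def by auto
  fix v :: int assume v: "v = -1 \<or> v = 1"
  show "Gf k (phi {(i0,j0)}) i0 v = 0" by (rule blk_e[OF i0 _ _ v]) (use a in auto)
qed

end

context rdsetup begin

definition "nu = cond J0 (tilt J0 lam (Rd NN k \<mu>)) \<Lambda> \<tau>"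
definition "mu' = cond NN (tilt NN lam' \<mu>) Lp tau'"
definition "w0 = (\<lambda>Y. Rd NN k \<mu> Y * (\<Prod>a\<in>{a\<in>J0. Y a = 1}. lam a))"
definition "w1 = (\<lambda>X. \<mu> X * (\<Prod>i\<in>{i\<in>NN. X i = 1}. lam' i))"

lemma mu_nn: "X \<in> cube NN \<Longrightarrow> 0 \<le> \<mu> X"
  using dist unfolding is_dist_def by auto

lemma Rd_nn: "0 \<le> Rd NN k \<mu> Y"
  unfolding Rd_def by (intro sum_nonneg mult_nonneg_nonneg mu_nn prod_nonneg) auto

lemma lam_nn: "a \<in> J0 \<Longrightarrow> 0 \<le> lam a" using lam by (simp add: less_imp_le)

lemma lam'_pos: "i \<in> NN \<Longrightarrow> 0 < lam' i"
  unfolding lam'_def using sumU_pos[of i] k by (auto simp: Lp_def)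

lemma w0_nn: "0 \<le> w0 Y"
  unfolding w0_def using lam_nn by (intro mult_nonneg_nonneg Rd_nn prod_nonneg) auto

lemma w1_nn: "X \<in> cube NN \<Longrightarrow> 0 \<le> w1 X"
  unfolding w1_def using lam'_pos by (intro mult_nonneg_nonneg mu_nn prod_nonneg) (auto simp: less_imp_le)

lemma VW: assumes "S \<subseteq> J0"
  shows "prob_ev J0 w0 (\<lambda>Y. (\<forall>a\<in>\<Lambda>. Y a = \<tau> a) \<and> (\<forall>a\<in>S. Y a = 1)) = W S"
proof -
  have "prob_ev J0 w0 (\<lambda>Y. (\<forall>a\<in>\<Lambda>. Y a = \<tau> a) \<and> (\<forall>a\<in>S. Y a = 1))
     = (\<Sum>Y\<in>cube J0. Rd NN k \<mu> Y * (\<Prod>a\<in>J0. phi S a (Y a)))"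
    unfolding w0_def phi_def by (rule weight_prod[OF _ LJ assms]) simp
  also have "\<dots> = W S" unfolding W_def by (rule Rd_factor) simp
  finally show ?thesis .
qed

lemma Lp_sub: "Lp \<subseteq> NN" unfolding Lp_def by auto

lemma VmHm: assumes "Q \<subseteq> NN"
  shows "prob_ev NN w1 (\<lambda>X. (\<forall>i\<in>Lp. X i = tau' i) \<and> (\<forall>i\<in>Q. X i = 1)) = Hm Q"
  unfolding w1_def Hm_def hh_def by (rule weight_prod[OF _ Lp_sub assms]) simp

lemma hh_nn: "i \<in> NN \<Longrightarrow> 0 \<le> hh Q i v"
  unfolding hh_def using lam'_pos[of i] by auto

lemma Hm_nn: "0 \<le> Hm Q"
  unfolding Hm_def using hh_nn by (intro sum_nonneg mult_nonneg_nonneg mu_nn prod_nonneg) auto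

lemma Hm_mono: assumes "Q \<subseteq> Q'" shows "Hm Q' \<le> Hm Q"
  unfolding Hm_def
proof (rule sum_mono)
  fix X assume X: "X \<in> cube NN"
  have "(\<Prod>i\<in>NN. hh Q' i (X i)) \<le> (\<Prod>i\<in>NN. hh Q i (X i))"
  proof (rule prod_mono)
    fix i assume i: "i \<in> NN"
    show "0 \<le> hh Q' i (X i) \<and> hh Q' i (X i) \<le> hh Q i (X i)"
      using assms hh_nn[OF i, of Q' "X i"] hh_nn[OF i, of Q "X i"] unfolding hh_def by auto
  qed
  then show "\<mu> X * (\<Prod>i\<in>NN. hh Q' i (X i)) \<le> \<mu> X * (\<Prod>i\<in>NN. hh Q i (X i))"
    using mu_nn[OF X] by (rule mult_left_mono)
qed

lemma marg_pos: "0 < marginal J0 (tilt J0 lam (Rd NN k \<mu>)) \<Lambda> \<tau>"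
  using tau unfolding support_marg_def by auto

lemma W0_pos: "0 < W {}"
proof -
  have m: "marginal J0 (tilt J0 lam (Rd NN k \<mu>)) \<Lambda> \<tau> = W {} / (\<Sum>\<sigma>'\<in>cube J0. w0 \<sigma>')"
    unfolding marginal_def prob_ev_tilt using VW[of "{}"] by (simp add: w0_def)
  have "0 \<le> (\<Sum>\<sigma>'\<in>cube J0. w0 \<sigma>')" using w0_nn by (simp add: sum_nonneg)
  then show ?thesis using marg_pos unfolding m
    by (metis divide_nonpos_nonneg not_less)
qed

lemma CC_Hm0: "CC \<noteq> 0" "0 < Hm {}"
proof -
  have "CC * Hm {} > 0" using W0_pos E0 by simp
  then show "CC \<noteq> 0" "0 < Hm {}" using Hm_nn[of "{}"] by (auto simp: less_le)
qed

lemma finJ0: "finite J0" by simp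
lemma finJJ: "finite JJ" by simp

lemma prob_nu: assumes S: "S \<subseteq> JJ"
  shows "prob_ev JJ nu (\<lambda>Y. \<forall>a\<in>S. Y a = 1) = W S / W {}"
proof -
  have "prob_ev JJ nu (\<lambda>Y. \<forall>a\<in>S. Y a = 1)
    = prob_ev J0 w0 (\<lambda>Y. (\<forall>a\<in>\<Lambda>. Y a = \<tau> a) \<and> (\<forall>a\<in>S. Y a = 1)) / prob_ev J0 w0 (\<lambda>Y. \<forall>a\<in>\<Lambda>. Y a = \<tau> a)"
    unfolding nu_def w0_def
    by (rule prob_cond_tilt[OF finJ0 LJ tau_cube _ marg_pos]) (use S in auto)
  also have "\<dots> = W S / W {}" using VW[of S] VW[of "{}"] S by auto
  finally show ?thesis .
qed

lemma marg'_pos: "0 < marginal NN (tilt NN lam' \<mu>) Lp tau'"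
proof -
  have m: "marginal NN (tilt NN lam' \<mu>) Lp tau' = Hm {} / (\<Sum>\<sigma>'\<in>cube NN. w1 \<sigma>')"
    unfolding marginal_def prob_ev_tilt using VmHm[of "{}"] by (simp add: w1_def)
  have "Hm {} = prob_ev NN w1 (\<lambda>X. (\<forall>i\<in>Lp. X i = tau' i))" using VmHm[of "{}"] by simp
  also have "\<dots> \<le> (\<Sum>\<sigma>'\<in>cube NN. w1 \<sigma>')"
    unfolding prob_ev_def by (rule sum_mono2) (auto intro: finite_cube w1_nn)
  finally have "0 < (\<Sum>\<sigma>'\<in>cube NN. w1 \<sigma>')" using CC_Hm0 by simp
  then show ?thesis unfolding m using CC_Hm0 by simp
qed

lemma tau'_supp: "tau' \<in> support_marg NN (tilt NN lam' \<mu>) Lp"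
  unfolding support_marg_def using tau'_cube marg'_pos by simp

lemma prob_mu: assumes Q: "Q \<subseteq> N'"
  shows "prob_ev N' mu' (\<lambda>X. \<forall>i\<in>Q. X i = 1) = Hm Q / Hm {}"
proof -
  have "prob_ev N' mu' (\<lambda>X. \<forall>i\<in>Q. X i = 1)
    = prob_ev NN w1 (\<lambda>X. (\<forall>i\<in>Lp. X i = tau' i) \<and> (\<forall>i\<in>Q. X i = 1)) / prob_ev NN w1 (\<lambda>X. \<forall>i\<in>Lp. X i = tau' i)"
    unfolding mu'_def w1_def
    by (rule prob_cond_tilt[OF _ Lp_sub tau'_cube _ marg'_pos]) (use Q in auto)
  also have "\<dots> = Hm Q / Hm {}" using VmHm[of Q] VmHm[of "{}"] Q by auto
  finally show ?thesis .
qed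

end

context rdsetup begin

definition "J1 = Sigma N' U"
definition "p i = prob_ev N' mu' (\<lambda>X. X i = 1)"
definition "p2 i i' = prob_ev N' mu' (\<lambda>X. X i = 1 \<and> X i' = 1)"

lemma J1_sub: "J1 \<subseteq> JJ" unfolding J1_def U_def by auto

lemma J1_iff: "a \<in> JJ \<Longrightarrow> fst a \<notin> Lp \<Longrightarrow> a \<in> J1"
  unfolding J1_def U_def by (cases a) auto

lemma J1_mem: "(i,j) \<in> J1 \<longleftrightarrow> i \<in> N' \<and> j \<in> U i" unfolding J1_def by auto

lemma finU: "finite (U i)" unfolding U_def by simp

lemma ev1: "(\<lambda>X::'x \<Rightarrow> int. X a = 1) = (\<lambda>X. \<forall>c\<in>{a}. X c = 1)" by auto
lemma ev2: "(\<lambda>X::'x \<Rightarrow> int. X a = 1 \<and> X b = 1) = (\<lambda>X. \<forall>c\<in>{a,b}. X c = 1)" by auto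

lemma p_eq: "i \<in> N' \<Longrightarrow> p i = Hm {i} / Hm {}"
  unfolding p_def ev1 by (rule prob_mu) auto

lemma p2_eq: "i \<in> N' \<Longrightarrow> i' \<in> N' \<Longrightarrow> p2 i i' = Hm {i,i'} / Hm {}"
  unfolding p2_def ev2 by (rule prob_mu) auto

lemma p_range: "i \<in> N' \<Longrightarrow> 0 \<le> p i \<and> p i \<le> 1"
  using p_eq Hm_nn[of "{i}"] Hm_mono[of "{}" "{i}"] CC_Hm0(2) by (simp add: divide_le_eq_1)

lemma q_pos: assumes i: "i \<in> N'" and j: "j \<in> U i" shows "0 < q i j"
proof -
  have iN: "i \<in> NN" using i by blast
  have Une: "U i \<noteq> {}" using j by blast
  have "0 < (\<Sum>j\<in>U i. lam (i,j))" by (rule sumU_pos[OF iN Une])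
  moreover have "0 < lam (i,j)" using j iN lam by (auto simp: U_def)
  ultimately show ?thesis unfolding q_def by simp
qed

lemma q_sum: "i \<in> N' \<Longrightarrow> (\<Sum>j\<in>U i. q i j) = 1"
  unfolding q_def using sumU_pos[of i] N'_props[of i] by (simp add: sum_divide_distrib[symmetric])

lemma q_le1: "i \<in> N' \<Longrightarrow> j \<in> U i \<Longrightarrow> q i j \<le> 1"
proof -
  assume i: "i \<in> N'" and j: "j \<in> U i"
  have "q i j \<le> (\<Sum>j\<in>U i. q i j)" using q_pos[OF i] j finU by (intro member_le_sum) (auto simp: less_imp_le)
  then show ?thesis using q_sum[OF i] by simp
qed

lemma nuT: "prob_ev JJ nu (\<lambda>Y. True) = 1"
  using prob_nu[of "{}"] W0_pos by simp

lemma nuM: "a \<in> JJ \<Longrightarrow> prob_ev JJ nu (\<lambda>Y. Y a = -1) = 1 - prob_ev JJ nu (\<lambda>Y. Y a = 1)"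
  using prob_ev_compl[OF finJJ] nuT by simp

lemma nu1: assumes a: "(i,j) \<in> J1"
  shows "prob_ev JJ nu (\<lambda>Y. Y (i,j) = 1) = q i j * p i"
proof -
  have i: "i \<in> N'" and j: "j \<in> U i" using a J1_mem by auto
  have "prob_ev JJ nu (\<lambda>Y. Y (i,j) = 1) = W {(i,j)} / W {}"
    unfolding ev1 by (rule prob_nu) (use a J1_sub in auto)
  also have "\<dots> = q i j * p i" unfolding E1[OF i j] E0 p_eq[OF i] using CC_Hm0 by simp
  finally show ?thesis .
qed

lemma nu1z: assumes a: "(i,j) \<in> JJ" and i: "i \<in> Lp"
  shows "prob_ev JJ nu (\<lambda>Y. Y (i,j) = 1) = 0"
proof -
  have "prob_ev JJ nu (\<lambda>Y. Y (i,j) = 1) = W {(i,j)} / W {}"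
    unfolding ev1 by (rule prob_nu) (use a in auto)
  then show ?thesis using E4[OF i a] by simp
qed

lemma nu2: assumes a: "(i,j) \<in> J1" and b: "(i',j') \<in> J1" and ne: "i \<noteq> i'"
  shows "prob_ev JJ nu (\<lambda>Y. Y (i,j) = 1 \<and> Y (i',j') = 1) = q i j * q i' j' * p2 i i'"
proof -
  have i: "i \<in> N'" "j \<in> U i" "i' \<in> N'" "j' \<in> U i'" using a b J1_mem by auto
  have "prob_ev JJ nu (\<lambda>Y. Y (i,j) = 1 \<and> Y (i',j') = 1) = W {(i,j),(i',j')} / W {}"
    unfolding ev2 by (rule prob_nu) (use a b J1_sub in auto)
  also have "\<dots> = q i j * q i' j' * p2 i i'" unfolding E2[OF i ne] E0 p2_eq[OF i(1,3)] using CC_Hm0 by simp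
  finally show ?thesis .
qed

lemma nu2z: assumes a: "(i,j) \<in> JJ" and b: "(i,j') \<in> JJ" and ne: "j \<noteq> j'"
  shows "prob_ev JJ nu (\<lambda>Y. Y (i,j) = 1 \<and> Y (i,j') = 1) = 0"
proof -
  have "prob_ev JJ nu (\<lambda>Y. Y (i,j) = 1 \<and> Y (i,j') = 1) = W {(i,j),(i,j')} / W {}"
    unfolding ev2 by (rule prob_nu) (use a b in auto)
  then show ?thesis using E3[of i j j'] a b ne by simp
qed

lemma rowJ2:
  assumes a: "a \<in> JJ" and aL: "fst a \<in> Lp" and b: "b \<in> JJ"
  shows "psi_abscor JJ nu a b = (if b = a then 1 else 0)"
proof -
  obtain i j where aij: "a = (i,j)" by (cases a)
  have z: "prob_ev JJ nu (\<lambda>Y. Y a = 1) = 0" using nu1z a aL aij by simp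
  show ?thesis
  proof (cases "b = a")
    case True
    have "psi_abscor JJ nu a a = 1" unfolding psi_abscor_def psi_cor_diag using nuM[OF a] z by simp
    then show ?thesis using True by simp
  next
    case False
    then show ?thesis unfolding psi_abscor_def using psi_cor_off[OF finJJ a b] z by auto
  qed
qed

definition "BB = psi_abscor N' mu'"

lemma BB_nn: "0 \<le> BB i i'" unfolding BB_def psi_abscor_def by simp

lemma finN': "finite N'" by simp

lemma bound:
  assumes a: "(i,j) \<in> J1" and b: "(i',j') \<in> J1"
  shows "psi_abscor JJ nu (i,j) (i',j') \<le> BB i i' * q i' j' + (if i = i' then (if (i,j) = (i',j') then 1 else 0) + q i' j' else 0)"
proof -
  have i: "i \<in> N'" "j \<in> U i" "i' \<in> N'" "j' \<in> U i'" using a b J1_mem by auto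
  have aJ: "(i,j) \<in> JJ" and bJ: "(i',j') \<in> JJ" using a b J1_sub by auto
  have BBi: "0 \<le> BB i i' * q i' j'" using BB_nn q_pos[OF i(3,4)] by simp
  have pr: "0 \<le> p i" "p i \<le> 1" "0 \<le> p i'" "p i' \<le> 1" using p_range i by auto
  have qr: "0 < q i j" "q i j \<le> 1" "0 < q i' j'" "q i' j' \<le> 1" using q_pos q_le1 i by auto
  show ?thesis
  proof (cases "(i,j) = (i',j')")
    case True
    have "psi_abscor JJ nu (i,j) (i,j) = \<bar>1 - q i j * p i\<bar>"
      unfolding psi_abscor_def psi_cor_diag using nuM[OF aJ] nu1[OF a] by simp
    then have "psi_abscor JJ nu (i,j) (i',j') = \<bar>1 - q i j * p i\<bar>" using True by simp
    also have "\<dots> \<le> 1" using pr qr by (simp add: mult_le_one)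
    finally show ?thesis using True BBi qr by simp
  next
    case ne: False
    show ?thesis
    proof (cases "i = i'")
      case True
      then have jj: "j \<noteq> j'" using ne by simp
      have "psi_abscor JJ nu (i,j) (i',j') \<le> q i' j' * p i'"
        unfolding psi_abscor_def psi_cor_off[OF finJJ aJ bJ ne] using nu2z[OF aJ _ jj] bJ True nu1[OF b] pr qr
        by (auto simp: mult_nonneg_nonneg)
      also have "\<dots> \<le> q i' j'" using pr qr by (simp add: mult_left_le)
      finally show ?thesis using True BBi ne by simp
    next
      case False
      show ?thesis
      proof (cases "0 < p i")
        case pp: True
        have "psi_abscor JJ nu (i,j) (i',j') = \<bar>q i j * q i' j' * p2 i i' / (q i j * p i) - q i' j' * p i'\<bar>"
          unfolding psi_abscor_def psi_cor_off[OF finJJ aJ bJ ne] nu2[OF a b False] nu1[OF a] nu1[OF b]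
          using pp qr by simp
        also have "\<dots> = q i' j' * \<bar>p2 i i' / p i - p i'\<bar>"
        proof -
          have "q i j * q i' j' * p2 i i' / (q i j * p i) - q i' j' * p i' = q i' j' * (p2 i i' / p i - p i')"
            using qr pp by (simp add: field_simps)
          then show ?thesis using qr by (simp add: abs_mult)
        qed
        also have "\<bar>p2 i i' / p i - p i'\<bar> = BB i i'"
          unfolding BB_def psi_abscor_def psi_cor_off[OF finN' i(1) i(3) False] p_def[symmetric] p2_def[symmetric]
          using pp by simp
        finally show ?thesis using False by (simp add: mult.commute)
      next
        case pp: False
        then have "p i = 0" using pr by simp
        then have "psi_abscor JJ nu (i,j) (i',j') = 0"
          unfolding psi_abscor_def psi_cor_off[OF finJJ aJ bJ ne] nu1[OF a] by simp
        then show ?thesis using BBi False by simp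
      qed
    qed
  qed
qed

end

context rdsetup begin

lemma eig_main:
  assumes eta: "0 < \<eta>" and sr: "spec_radius N' BB \<le> \<eta>"
    and ev: "is_eigenvalue JJ (psi_abscor JJ nu) c"
  shows "cmod c \<le> \<eta> + 2"
proof (rule ccontr)
  assume "\<not> ?thesis"
  then have big: "\<eta> + 2 < cmod c" by simp
  let ?A = "psi_abscor JJ nu"
  from ev obtain x where nz: "\<exists>a\<in>JJ. x a \<noteq> 0"
    and eq: "\<And>a. a\<in>JJ \<Longrightarrow> (\<Sum>b\<in>JJ. complex_of_real (?A a b) * x b) = c * x a"
    unfolding is_eigenvalue_def by blast
  have c1: "c \<noteq> 1" using big eta by auto
  have x2: "x a = 0" if a: "a \<in> JJ" and aL: "fst a \<in> Lp" for a
  proof -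
    have "(\<Sum>b\<in>JJ. complex_of_real (?A a b) * x b) = (\<Sum>b\<in>JJ. if b = a then x b else 0)"
    proof (rule sum.cong[OF refl])
      fix b assume b: "b \<in> JJ"
      show "complex_of_real (?A a b) * x b = (if b = a then x b else 0)" using rowJ2[OF a aL b] by simp
    qed
    also have "\<dots> = x a" using a by (simp add: sum.delta')
    finally have "x a = c * x a" using eq[OF a] by simp
    then have "(c - 1) * x a = 0" by (simp add: algebra_simps)
    then show ?thesis using c1 by simp
  qed
  define z where "z i = (\<Sum>j\<in>U i. q i j * cmod (x (i,j)))" for i
  have z_nn: "0 \<le> z i" if "i \<in> N'" for i
    unfolding z_def using q_pos[OF that] by (intro sum_nonneg) (simp add: less_imp_le)
  have A_nn: "0 \<le> ?A a b" for a b unfolding psi_abscor_def by simp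
  have step2: "cmod c * cmod (x (i,j)) \<le> (\<Sum>i'\<in>N'. BB i i' * z i') + cmod (x (i,j)) + z i"
    if ij: "(i,j) \<in> J1" for i j
  proof -
    have i: "i \<in> N'" and j: "j \<in> U i" using ij J1_mem by auto
    have aJ: "(i,j) \<in> JJ" using ij J1_sub by auto
    let ?R = "\<lambda>i' j'. BB i i' * q i' j' + (if i = i' then (if j = j' then 1 else 0) + q i' j' else 0)"
    have "cmod c * cmod (x (i,j)) = cmod (\<Sum>b\<in>JJ. complex_of_real (?A (i,j) b) * x b)"
      using eq[OF aJ] by (simp add: norm_mult)
    also have "\<dots> \<le> (\<Sum>b\<in>JJ. cmod (complex_of_real (?A (i,j) b) * x b))" by (rule norm_sum)
    also have "\<dots> = (\<Sum>b\<in>JJ. ?A (i,j) b * cmod (x b))" using A_nn by (simp add: norm_mult)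
    also have "\<dots> = (\<Sum>b\<in>J1. ?A (i,j) b * cmod (x b))"
    proof (rule sum.mono_neutral_right[OF finJJ J1_sub])
      show "\<forall>b\<in>JJ - J1. ?A (i,j) b * cmod (x b) = 0"
      proof
        fix b assume b: "b \<in> JJ - J1"
        then have "fst b \<in> Lp" using J1_iff by blast
        then show "?A (i,j) b * cmod (x b) = 0" using x2 b by simp
      qed
    qed
    also have "\<dots> \<le> (\<Sum>b\<in>J1. (\<lambda>(i',j'). ?R i' j' * cmod (x (i',j'))) b)"
    proof (rule sum_mono)
      fix b assume b: "b \<in> J1"
      obtain i' j' where bij: "b = (i',j')" by (cases b)
      have b': "(i',j') \<in> J1" using b bij by simp
      have "?A (i,j) (i',j') \<le> ?R i' j'" using bound[OF ij b'] by (cases "i = i'") auto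
      then have "?A (i,j) (i',j') * cmod (x (i',j')) \<le> ?R i' j' * cmod (x (i',j'))" by (rule mult_right_mono) simp
      then show "?A (i,j) b * cmod (x b) \<le> (\<lambda>(i',j'). ?R i' j' * cmod (x (i',j'))) b" using bij by simp
    qed
    also have "\<dots> = (\<Sum>i'\<in>N'. \<Sum>j'\<in>U i'. ?R i' j' * cmod (x (i',j')))"
      unfolding J1_def by (rule sum.Sigma[symmetric]) (auto simp: finU)
    also have "\<dots> = (\<Sum>i'\<in>N'. BB i i' * z i') + (\<Sum>i'\<in>N'. if i = i' then (\<Sum>j'\<in>U i'. ((if j = j' then 1 else 0) + q i' j') * cmod (x (i',j'))) else 0)"
    proof -
      have "(\<Sum>i'\<in>N'. \<Sum>j'\<in>U i'. ?R i' j' * cmod (x (i',j')))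
          = (\<Sum>i'\<in>N'. (\<Sum>j'\<in>U i'. BB i i' * (q i' j' * cmod (x (i',j'))))
               + (\<Sum>j'\<in>U i'. (if i = i' then ((if j = j' then 1 else 0) + q i' j') * cmod (x (i',j')) else 0)))"
      proof (rule sum.cong[OF refl])
        fix i' assume "i' \<in> N'"
        show "(\<Sum>j'\<in>U i'. ?R i' j' * cmod (x (i',j')))
          = (\<Sum>j'\<in>U i'. BB i i' * (q i' j' * cmod (x (i',j'))))
               + (\<Sum>j'\<in>U i'. (if i = i' then ((if j = j' then 1 else 0) + q i' j') * cmod (x (i',j')) else 0))"
          unfolding sum.distrib[symmetric] by (rule sum.cong[OF refl]) (simp add: distrib_right)
      qed
      also have "\<dots> = (\<Sum>i'\<in>N'. BB i i' * z i' + (if i = i' then (\<Sum>j'\<in>U i'. ((if j = j' then 1 else 0) + q i' j') * cmod (x (i',j'))) else 0))"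
        unfolding z_def by (intro sum.cong refl arg_cong2[where f="(+)"]) (simp_all add: sum_distrib_left)
      finally show ?thesis by (simp add: sum.distrib)
    qed
    also have "(\<Sum>i'\<in>N'. if i = i' then (\<Sum>j'\<in>U i'. ((if j = j' then 1 else 0) + q i' j') * cmod (x (i',j'))) else 0)
        = (\<Sum>j'\<in>U i. ((if j = j' then 1 else 0) + q i j') * cmod (x (i,j')))"
      using i by (simp add: sum.delta)
    also have "\<dots> = cmod (x (i,j)) + z i"
    proof -
      have "(\<Sum>j'\<in>U i. ((if j = j' then 1 else 0) + q i j') * cmod (x (i,j')))
          = (\<Sum>j'\<in>U i. (if j = j' then cmod (x (i,j')) else 0) + q i j' * cmod (x (i,j')))"
        by (intro sum.cong) (auto simp: distrib_right)
      also have "\<dots> = cmod (x (i,j)) + z i" unfolding sum.distrib z_def using j finU by (simp add: sum.delta)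
      finally show ?thesis .
    qed
    finally show ?thesis by simp
  qed
  have step3: "(cmod c - 2) * z i \<le> (\<Sum>i'\<in>N'. BB i i' * z i')" if i: "i \<in> N'" for i
  proof -
    let ?Bz = "\<Sum>i'\<in>N'. BB i i' * z i'"
    have "cmod c * z i = (\<Sum>j\<in>U i. q i j * (cmod c * cmod (x (i,j))))"
      unfolding z_def by (simp add: sum_distrib_left algebra_simps)
    also have "\<dots> \<le> (\<Sum>j\<in>U i. q i j * (?Bz + cmod (x (i,j)) + z i))"
    proof (rule sum_mono)
      fix j assume j: "j \<in> U i"
      then have "(i,j) \<in> J1" using i J1_mem by auto
      from step2[OF this] show "q i j * (cmod c * cmod (x (i,j))) \<le> q i j * (?Bz + cmod (x (i,j)) + z i)"
        using q_pos[OF i j] by (intro mult_left_mono) auto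
    qed
    also have "\<dots> = (\<Sum>j\<in>U i. ?Bz * q i j + q i j * cmod (x (i,j)) + z i * q i j)"
      by (intro sum.cong refl) (simp add: algebra_simps)
    also have "\<dots> = ?Bz * (\<Sum>j\<in>U i. q i j) + z i + z i * (\<Sum>j\<in>U i. q i j)"
    proof -
      have zz: "(\<Sum>j\<in>U i. q i j * cmod (x (i,j))) = z i" by (simp add: z_def)
      show ?thesis by (simp only: sum.distrib sum_distrib_left zz)
    qed
    also have "\<dots> = ?Bz + 2 * z i" using q_sum[OF i] by simp
    finally show ?thesis by (simp add: algebra_simps)
  qed
  obtain a where aJ: "a \<in> JJ" and xa: "x a \<noteq> 0" using nz by blast
  obtain i0 j0 where a0: "a = (i0,j0)" by (cases a)
  have "fst a \<notin> Lp" using x2 aJ xa by blast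
  then have aJ1: "(i0,j0) \<in> J1" using J1_iff[OF aJ] a0 by simp
  then have i0: "i0 \<in> N'" and j0: "j0 \<in> U i0" using J1_mem by auto
  have "0 < q i0 j0 * cmod (x (i0,j0))" using q_pos[OF i0 j0] xa a0 by simp
  also have "\<dots> \<le> z i0" unfolding z_def
  proof (rule member_le_sum)
    fix j assume "j \<in> U i0 - {j0}"
    then have "0 < q i0 j" using q_pos[OF i0] by blast
    then show "0 \<le> q i0 j * cmod (x (i0, j))" by simp
  qed (use j0 finU in auto)
  finally have zpos: "0 < z i0" .
  have "cmod c - 2 \<le> spec_radius N' BB"
    by (rule perron_lite[OF finN' _ z_nn i0 zpos _ step3]) (use BB_nn big eta in auto)
  then show False using sr big by simp
qed

end

theorem lemma6p10:
  fixes \<eta> \<epsilon> :: real and n k :: nat and \<mu> :: "(nat \<Rightarrow> int) \<Rightarrow> real"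
  assumes "\<eta> > 0" and "\<epsilon> > 0"
    and "is_dist {1..n} \<mu>"
    and "complete_limited_corr {1..n} \<mu> \<eta> \<epsilon>"
    and "k \<ge> 1"
  shows "complete_limited_corr ({1..n} \<times> {1..k}) (Rd {1..n} k \<mu>) (\<eta> + 2) \<epsilon>"
  unfolding complete_limited_corr_def limited_corr_def
proof (intro allI impI ballI)
  fix lam :: "nat \<times> nat \<Rightarrow> real" and \<Lambda> \<tau>
  assume lamH: "\<forall>a\<in>{1..n} \<times> {1..k}. 0 < lam a \<and> lam a \<le> 1 + \<epsilon>"
    and L: "\<Lambda> \<subseteq> {1..n} \<times> {1..k}"
    and t: "\<tau> \<in> support_marg ({1..n} \<times> {1..k}) (tilt ({1..n} \<times> {1..k}) lam (Rd {1..n} k \<mu>)) \<Lambda>"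
  interpret R: rdsetup n k \<mu> lam \<Lambda> \<tau>
    by unfold_locales (use assms lamH L t in auto)
  have lam'H: "\<forall>i\<in>{1..n}. 0 < R.lam' i \<and> R.lam' i \<le> 1 + \<epsilon>"
  proof
    fix i assume i: "i \<in> {1..n}"
    have "R.lam' i \<le> 1 + \<epsilon>"
    proof (cases "i \<in> R.Lp")
      case True then show ?thesis using assms(2) unfolding R.lam'_def by simp
    next
      case False
      have "(\<Sum>j\<in>R.U i. lam (i,j)) \<le> of_nat (card (R.U i)) * (1 + \<epsilon>)"
        using lamH i by (intro sum_bounded_above) (auto simp: R.U_def)
      also have "\<dots> \<le> real k * (1 + \<epsilon>)"
      proof -
        have "card (R.U i) \<le> card {1..k}" by (rule card_mono) (auto simp: R.U_def)
        then show ?thesis using assms(2) by (intro mult_right_mono) auto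
      qed
      finally show ?thesis using False assms(5) unfolding R.lam'_def by (simp add: field_simps)
    qed
    then show "0 < R.lam' i \<and> R.lam' i \<le> 1 + \<epsilon>" using R.lam'_pos i by simp
  qed
  have sr: "spec_radius R.N' R.BB \<le> \<eta>"
    using assms(4) lam'H R.Lp_sub R.tau'_supp
    unfolding complete_limited_corr_def limited_corr_def R.BB_def R.mu'_def by blast
  show "spec_radius ({1..n} \<times> {1..k} - \<Lambda>) (psi_abscor ({1..n} \<times> {1..k} - \<Lambda>)
          (cond ({1..n} \<times> {1..k}) (tilt ({1..n} \<times> {1..k}) lam (Rd {1..n} k \<mu>)) \<Lambda> \<tau>)) \<le> \<eta> + 2"
  proof -
    have e2: "0 \<le> \<eta> + 2" using assms(1) by linarith
    show ?thesis unfolding R.nu_def[symmetric]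
      by (rule spec_le[OF R.finJJ R.eig_main[OF assms(1) sr] e2])
  qed
qed

end
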